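(* For $n\in\{2,3\}$, in $\mathcal X(GU(n,2),\Phi(n,2))$: (a) The symmetrization, with relations $\mathcal R_0$, $\mathcal R_1\cup\mathcal R_2$, $\mathcal R_3$, $\mathcal R_4\cup\mathcal R_5$ (in this column order), is an association scheme whose character table (rows followed by multiplicities) is, for $n=2$: $(1,2,2,4)$ [1], $(1,-1,2,-2)$ [2], $(1,2,-1,-2)$ [2], $(1,-1,-1,1)$ [4]; and for $n=3$: $(1,2,8,16)$ [1], $(1,-1,-4,4)$ [6], $(1,2,-1,-2)$ [8], $(1,-1,2,-2)$ [12]. (b) The partition with relations $\mathcal R_0$, $\widehat R_1=\mathcal R_1\cup\mathcal R_2$, $\widehat R_2=\mathcal R_3\cup\mathcal R_4\cup\mathcal R_5$ yields a 2-class fusion scheme whose character table (rows followed by multiplicities) is, for $n=2$: $(1,2,6)$ [1], $(1,2,-3)$ [2], $(1,-1,0)$ [6]; and for $n=3$: $(1,2,24)$ [1], $(1,2,-3)$ [8], $(1,-1,0)$ [18].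
   Context: Let $\Phi=\Phi(n,2)=\{x\in\mathbb{F}_4^n\setminus\{0\}:\langle x,x\rangle=0\}$, $\langle x,y\rangle=\sum_kx_ky_k^2$, and $\mathcal X(GU(n,2),\Phi(n,2))$ the association scheme of orbitals of $GU(n,2)$ acting on $\Phi$ by $x\mapsto xU$. Fix a primitive $\alpha\in\mathbb{F}_4$. For $n\in\{2,3\}$ the relations are $\mathcal R_l=\{(x,y)\in\Phi^2:y=\alpha^lx\}$ ($l=0,1,2$) and $\mathcal R_l=\{(x,y)\in\Phi^2:\langle x,y\rangle=\alpha^l\}$ ($l=3,4,5$). A fusion scheme of $\mathcal X$ is an association scheme on the same set each of whose relations is a union of relations of $\mathcal X$; the symmetrization fuses each relation with its converse. Character table: $P=[p_j(i)]$ with $A_j=\sum_ip_j(i)E_i$ over the primitive idempotents $E_i$ ($E_0=\frac1{|\Phi|}J$ first), multiplicity $=\mathrm{rank}\,E_i$; rows are given up to ordering of $E_1,\dots$. *)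

theory Defs
  imports Complex_Main "Jordan_Normal_Form.DL_Rank"
begin

text \<open>F_4 = {0, 1, a, b} with a a primitive element, a^2 = b = a + 1.\<close>

datatype gf4 = Z4 | O4 | A4 | B4

instantiation gf4 :: field
begin

definition zero_gf4 :: gf4 where "zero_gf4 = Z4"
definition one_gf4 :: gf4 where "one_gf4 = O4"

fun plus_gf4 :: "gf4 \<Rightarrow> gf4 \<Rightarrow> gf4" where
  "plus_gf4 Z4 y = y"
| "plus_gf4 x Z4 = x"
| "plus_gf4 O4 O4 = Z4" | "plus_gf4 O4 A4 = B4" | "plus_gf4 O4 B4 = A4"
| "plus_gf4 A4 O4 = B4" | "plus_gf4 A4 A4 = Z4" | "plus_gf4 A4 B4 = O4"
| "plus_gf4 B4 O4 = A4" | "plus_gf4 B4 A4 = O4" | "plus_gf4 B4 B4 = Z4"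

definition uminus_gf4 :: "gf4 \<Rightarrow> gf4" where "uminus_gf4 x = x"
definition minus_gf4 :: "gf4 \<Rightarrow> gf4 \<Rightarrow> gf4" where "minus_gf4 x y = x + y"

fun times_gf4 :: "gf4 \<Rightarrow> gf4 \<Rightarrow> gf4" where
  "times_gf4 Z4 y = Z4"
| "times_gf4 x Z4 = Z4"
| "times_gf4 O4 y = y"
| "times_gf4 x O4 = x"
| "times_gf4 A4 A4 = B4" | "times_gf4 A4 B4 = O4"
| "times_gf4 B4 A4 = O4" | "times_gf4 B4 B4 = A4"

fun inverse_gf4 :: "gf4 \<Rightarrow> gf4" where
  "inverse_gf4 Z4 = Z4" | "inverse_gf4 O4 = O4"
| "inverse_gf4 A4 = B4" | "inverse_gf4 B4 = A4"

definition divide_gf4 :: "gf4 \<Rightarrow> gf4 \<Rightarrow> gf4" where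
  "divide_gf4 x y = x * inverse y"

instance
proof
  fix a b c :: gf4
  show "a + b + c = a + (b + c)" by (cases a; cases b; cases c; simp)
  show "a + b = b + a" by (cases a; cases b; simp)
  show "0 + a = a" by (simp add: zero_gf4_def)
  show "- a + a = 0" by (cases a; simp add: uminus_gf4_def zero_gf4_def)
  show "a - b = a + - b" by (simp add: minus_gf4_def uminus_gf4_def)
  show "a * b * c = a * (b * c)" by (cases a; cases b; cases c; simp)
  show "a * b = b * a" by (cases a; cases b; simp)
  show "1 * a = a" by (cases a; simp add: one_gf4_def)
  show "(a + b) * c = a * c + b * c" by (cases a; cases b; cases c; simp)
  show "(0::gf4) \<noteq> 1" by (simp add: zero_gf4_def one_gf4_def)
  show "a \<noteq> 0 \<Longrightarrow> inverse a * a = 1"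
    by (cases a; simp add: zero_gf4_def one_gf4_def)
  show "divide a b = times a (inverse b :: gf4)" by (simp add: divide_gf4_def)
  show "inverse (0::gf4) = (0::gf4)" by (simp add: zero_gf4_def)
qed

end

definition alpha :: gf4 where "alpha = A4"

definition herm :: "gf4 list \<Rightarrow> gf4 list \<Rightarrow> gf4" where
  "herm x y = sum_list (map2 (\<lambda>a b. a * b ^ 2) x y)"

definition Phi :: "nat \<Rightarrow> gf4 list set" where
  "Phi n = {x. length x = n \<and> x \<noteq> replicate n 0 \<and> herm x x = 0}"

definition smult_vec4 :: "gf4 \<Rightarrow> gf4 list \<Rightarrow> gf4 list" where
  "smult_vec4 c x = map (\<lambda>a. c * a) x"

definition Rel :: "nat \<Rightarrow> nat \<Rightarrow> (gf4 list \<times> gf4 list) set" where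
  "Rel n l = (if l < 3
     then {(x, y). x \<in> Phi n \<and> y \<in> Phi n \<and> y = smult_vec4 (alpha ^ l) x}
     else {(x, y). x \<in> Phi n \<and> y \<in> Phi n \<and> herm x y = alpha ^ l})"

definition assoc_scheme :: "'a set \<Rightarrow> ('a \<times> 'a) set list \<Rightarrow> bool" where
  "assoc_scheme X Rs \<longleftrightarrow>
     finite X \<and> Rs \<noteq> [] \<and>
     Rs ! 0 = Id_on X \<and>
     (\<forall>R \<in> set Rs. R \<noteq> {} \<and> R \<subseteq> X \<times> X) \<and>
     (\<forall>i < length Rs. \<forall>j < length Rs. i \<noteq> j \<longrightarrow> Rs ! i \<inter> Rs ! j = {}) \<and>
     \<Union> (set Rs) = X \<times> X \<and>
     (\<forall>i < length Rs. \<exists>j < length Rs. converse (Rs ! i) = Rs ! j) \<and>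
     (\<forall>i < length Rs. \<forall>j < length Rs. \<forall>k < length Rs. \<exists>p::nat.
        \<forall>(x, y) \<in> Rs ! k. card {z \<in> X. (x, z) \<in> Rs ! i \<and> (z, y) \<in> Rs ! j} = p)"

definition adj_mat :: "'a list \<Rightarrow> ('a \<times> 'a) set \<Rightarrow> complex mat" where
  "adj_mat xs R = mat (length xs) (length xs)
     (\<lambda>(i, j). if (xs ! i, xs ! j) \<in> R then 1 else 0)"

definition lincomb_mat :: "nat \<Rightarrow> (nat \<Rightarrow> complex) \<Rightarrow> complex mat list \<Rightarrow> complex mat" where
  "lincomb_mat N c Ms = mat N N (\<lambda>(i, j). \<Sum>k < length Ms. c k * Ms ! k $$ (i, j))"

definition bose_mesner :: "'a list \<Rightarrow> ('a \<times> 'a) set list \<Rightarrow> complex mat set" where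
  "bose_mesner xs Rs = {lincomb_mat (length xs) c (map (adj_mat xs) Rs) | c. True}"

definition primitive_idempotent :: "complex mat set \<Rightarrow> complex mat \<Rightarrow> bool" where
  "primitive_idempotent Alg E \<longleftrightarrow>
     E \<in> Alg \<and> E * E = E \<and> E \<noteq> 0\<^sub>m (dim_row E) (dim_col E) \<and>
     (\<forall>F \<in> Alg. F * F = F \<longrightarrow> E * F = 0\<^sub>m (dim_row E) (dim_col E) \<or> E * F = E)"

text \<open>The scheme (X, Rs) has character table P (list of rows; P!i!j = p_j(i))
  with multiplicities m (m!i = rank E_i): for any enumeration of X, the primitive
  idempotents can be ordered E_0 = J/|X|, E_1, ..., E_d so that
  A_j = sum_i p_j(i) E_i and rank E_i = m!i.\<close>

definition has_char_table ::
  "'a set \<Rightarrow> ('a \<times> 'a) set list \<Rightarrow> int list list \<Rightarrow> nat list \<Rightarrow> bool" where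
  "has_char_table X Rs P m \<longleftrightarrow>
     (\<forall>xs. distinct xs \<and> set xs = X \<longrightarrow>
       (let N = length xs; d1 = length Rs; Alg = bose_mesner xs Rs in
        \<exists>Es :: complex mat list.
          length Es = d1 \<and> distinct Es \<and>
          Es ! 0 = mat N N (\<lambda>_. 1 / of_nat N) \<and>
          (\<forall>i < d1. primitive_idempotent Alg (Es ! i)) \<and>
          (\<forall>E. primitive_idempotent Alg E \<longrightarrow> E \<in> set Es) \<and>
          (\<forall>j < d1. adj_mat xs (Rs ! j) = lincomb_mat N (\<lambda>i. of_int (P ! i ! j)) Es) \<and>
          (\<forall>i < d1. vec_space.rank N (Es ! i) = m ! i)))"

end

theory Submission
  imports Defs
begin

definition relsof :: "'a set \<Rightarrow> ('a \<Rightarrow> 'a \<Rightarrow> nat) \<Rightarrow> nat \<Rightarrow> ('a \<times> 'a) set list" where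
  "relsof X r D = map (\<lambda>j. {(x,y). x \<in> X \<and> y \<in> X \<and> r x y = j}) [0..<D]"

definition kmat :: "'a list \<Rightarrow> ('a \<Rightarrow> 'a \<Rightarrow> complex) \<Rightarrow> complex mat" where
  "kmat xs K = mat (length xs) (length xs) (\<lambda>(i,j). K (xs!i) (xs!j))"

definition dlt :: "nat \<Rightarrow> nat \<Rightarrow> complex" where "dlt j k = (if k = j then 1 else 0)"

lemma sum_dlt_r: "(\<Sum>k<D. h k * dlt j k) = (if j < D then h j else 0)"
proof -
  have "(\<Sum>k<D. h k * dlt j k) = (\<Sum>k<D. if k = j then h k else 0)"
    by (rule sum.cong) (auto simp: dlt_def)
  then show ?thesis by (simp add: sum.delta')
qed

lemma sum_dlt_l: "(\<Sum>k<D. h k * dlt k j) = (if j < D then h j else 0)"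
proof -
  have "(\<Sum>k<D. h k * dlt k j) = (\<Sum>k<D. if k = j then h k else 0)"
    by (rule sum.cong) (auto simp: dlt_def)
  then show ?thesis by (simp add: sum.delta')
qed

lemma kmat_carrier[simp]: "kmat xs K \<in> carrier_mat (length xs) (length xs)"
  by (simp add: kmat_def)
lemma kmat_dims[simp]: "dim_row (kmat xs K) = length xs" "dim_col (kmat xs K) = length xs"
  by (simp_all add: kmat_def)
lemma kmat_index[simp]: "i < length xs \<Longrightarrow> j < length xs \<Longrightarrow> kmat xs K $$ (i,j) = K (xs!i) (xs!j)"
  by (simp add: kmat_def)

lemma kmat_cong:
  assumes "\<And>x y. x \<in> set xs \<Longrightarrow> y \<in> set xs \<Longrightarrow> K x y = K' x y"
  shows "kmat xs K = kmat xs K'"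
  using assms by (intro eq_matI) auto

lemma sum_nth_distinct:
  assumes "distinct xs"
  shows "(\<Sum>c\<in>{0..<length xs}. h (xs!c)) = (\<Sum>z\<in>set xs. h z)"
proof -
  have "(\<Sum>c\<in>{0..<length xs}. h (xs!c)) = sum_list (map h xs)"
    by (simp add: sum_list_sum_nth atLeast0LessThan)
  also have "\<dots> = (\<Sum>z\<in>set xs. h z)" using assms by (simp add: sum_list_distinct_conv_sum_set)
  finally show ?thesis .
qed

lemma kmat_mult:
  assumes "distinct xs"
  shows "kmat xs K * kmat xs L = kmat xs (\<lambda>x y. \<Sum>z\<in>set xs. K x z * L z y)"
proof (intro eq_matI)
  fix i j assume "i < dim_row (kmat xs (\<lambda>x y. \<Sum>z\<in>set xs. K x z * L z y))"
    "j < dim_col (kmat xs (\<lambda>x y. \<Sum>z\<in>set xs. K x z * L z y))"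
  then have ij: "i < length xs" "j < length xs" by auto
  have "(kmat xs K * kmat xs L) $$ (i,j) = row (kmat xs K) i \<bullet> col (kmat xs L) j"
    using ij by simp
  also have "\<dots> = (\<Sum>c\<in>{0..<length xs}. K (xs!i) (xs!c) * L (xs!c) (xs!j))"
    using ij by (simp add: scalar_prod_def)
  also have "\<dots> = (\<Sum>z\<in>set xs. K (xs!i) z * L z (xs!j))"
    using sum_nth_distinct[OF assms, of "\<lambda>z. K (xs!i) z * L z (xs!j)"] .
  finally show "(kmat xs K * kmat xs L) $$ (i,j) = kmat xs (\<lambda>x y. \<Sum>z\<in>set xs. K x z * L z y) $$ (i,j)"
    using ij by simp
qed auto

lemma kmat_add: "kmat xs K + kmat xs L = kmat xs (\<lambda>x y. K x y + L x y)"
  by (intro eq_matI) auto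

lemma kmat_smult: "a \<cdot>\<^sub>m kmat xs K = kmat xs (\<lambda>x y. a * K x y)"
  by (intro eq_matI) auto

lemma sum_if_card:
  assumes "finite X"
  shows "(\<Sum>z\<in>X. if P z then c else 0) = of_nat (card {z\<in>X. P z}) * (c::complex)"
proof -
  have "(\<Sum>z\<in>X. if P z then c else 0) = (\<Sum>z\<in>{z\<in>X. P z}. c)"
    using assms by (simp add: sum.inter_filter[symmetric])
  also have "\<dots> = of_nat (card {z\<in>X. P z}) * c" by simp
  finally show ?thesis .
qed

lemma rank_sum_le1:
  fixes U V :: "nat \<Rightarrow> nat \<Rightarrow> complex"
  shows "vec_space.rank N (mat N N (\<lambda>(i,j). \<Sum>t<m. U t i * V t j)) \<le> m"
proof (induction m)
  case 0
  have z: "(\<lambda>(i,j). \<Sum>t<0. U t i * V t j) = (\<lambda>_. 0)" by auto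
  have m0: "mat N N (\<lambda>_. 0) = 0\<^sub>m N N" by (intro eq_matI) auto
  show ?case by (simp only: z m0 vec_space.rank_0I order_refl)
next
  case (Suc m)
  have eq: "mat N N (\<lambda>(i,j). \<Sum>t<Suc m. U t i * V t j)
      = mat N N (\<lambda>(i,j). \<Sum>t<m. U t i * V t j) + mat N N (\<lambda>(i,j). U m i * V m j)"
    by (intro eq_matI) auto
  have c1: "mat N N (\<lambda>(i,j). U m i * V m j) \<in> carrier_mat N N" by simp
  have e1: "\<And>i j. i < dim_row (mat N N (\<lambda>(i,j). U m i * V m j)) \<Longrightarrow> j < dim_col (mat N N (\<lambda>(i,j). U m i * V m j)) \<Longrightarrow> mat N N (\<lambda>(i,j). U m i * V m j) $$ (i,j) = U m i * V m j"
    by simp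
  have "vec_space.rank N (mat N N (\<lambda>(i,j). U m i * V m j)) \<le> 1"
    by (rule vec_space.rank_le_1_product_entries[OF c1 e1])
  moreover have c2: "mat N N (\<lambda>(i,j). \<Sum>t<m. U t i * V t j) \<in> carrier_mat N N" by simp
  have "vec_space.rank N (mat N N (\<lambda>(i,j). \<Sum>t<Suc m. U t i * V t j))
     \<le> vec_space.rank N (mat N N (\<lambda>(i,j). \<Sum>t<m. U t i * V t j)) + vec_space.rank N (mat N N (\<lambda>(i,j). U m i * V m j))"
    unfolding eq by (rule vec_space.rank_subadditive[OF c2 c1])
  ultimately show ?case using Suc by linarith
qed

lemma rank_kmat_decomp:
  assumes "\<And>x y. x \<in> set xs \<Longrightarrow> y \<in> set xs \<Longrightarrow> K x y = (\<Sum>t<m. u t x * v t y)"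
  shows "vec_space.rank (length xs) (kmat xs K) \<le> m"
proof -
  have "kmat xs K = mat (length xs) (length xs) (\<lambda>(i,j). \<Sum>t<m. u t (xs!i) * v t (xs!j))"
    using assms by (intro eq_matI) auto
  then show ?thesis using rank_sum_le1[where N="length xs" and m=m and U="\<lambda>t i. u t (xs!i)" and V="\<lambda>t j. v t (xs!j)"] by simp
qed

lemma rank_kmat_add:
  "vec_space.rank (length xs) (kmat xs (\<lambda>x y. K x y + L x y)) \<le> vec_space.rank (length xs) (kmat xs K) + vec_space.rank (length xs) (kmat xs L)"
  using vec_space.rank_subadditive[OF kmat_carrier kmat_carrier, of xs K L] by (simp add: kmat_add)


locale cscheme =
  fixes X :: "'a set" and r :: "'a \<Rightarrow> 'a \<Rightarrow> nat" and D :: nat and pn :: "nat \<Rightarrow> nat \<Rightarrow> nat \<Rightarrow> nat"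
  assumes fin: "finite X"
  and Dpos: "0 < D"
  and rD: "\<And>x y. x \<in> X \<Longrightarrow> y \<in> X \<Longrightarrow> r x y < D"
  and r0: "\<And>x y. x \<in> X \<Longrightarrow> y \<in> X \<Longrightarrow> r x y = 0 \<longleftrightarrow> x = y"
  and realized: "\<And>k. k < D \<Longrightarrow> \<exists>x\<in>X. \<exists>y\<in>X. r x y = k"
  and rsym: "\<And>x y. x \<in> X \<Longrightarrow> y \<in> X \<Longrightarrow> r y x = r x y"
  and pn: "\<And>x y a b. x \<in> X \<Longrightarrow> y \<in> X \<Longrightarrow> card {z\<in>X. r x z = a \<and> r z y = b} = pn (r x y) a b"
begin

abbreviation Rs where "Rs \<equiv> relsof X r D"

lemma Rs_nth: "j < D \<Longrightarrow> Rs ! j = {(x,y). x \<in> X \<and> y \<in> X \<and> r x y = j}"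
  by (simp add: relsof_def)

lemma length_Rs[simp]: "length Rs = D" by (simp add: relsof_def)

lemma is_scheme: "assoc_scheme X Rs"
  unfolding assoc_scheme_def
proof (intro conjI allI impI ballI)
  show "finite X" by (rule fin)
  show "Rs \<noteq> []" using Dpos by (simp add: relsof_def)
  show "Rs ! 0 = Id_on X" using Dpos r0 by (auto simp: Rs_nth Id_on_def)
  fix R assume "R \<in> set Rs"
  then obtain j where j: "j < D" "R = Rs ! j" by (auto simp: in_set_conv_nth)
  show "R \<noteq> {}" using realized[OF j(1)] j by (auto simp: Rs_nth)
  show "R \<subseteq> X \<times> X" using j by (auto simp: Rs_nth)
next
  fix i j assume "i < length Rs" "j < length Rs" "i \<noteq> j"
  then show "Rs ! i \<inter> Rs ! j = {}" by (auto simp: Rs_nth)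
next
  show "\<Union> (set Rs) = X \<times> X"
  proof
    show "\<Union> (set Rs) \<subseteq> X \<times> X" by (auto simp: relsof_def)
    show "X \<times> X \<subseteq> \<Union> (set Rs)"
    proof
      fix p assume "p \<in> X \<times> X"
      then obtain x y where p: "p = (x,y)" "x \<in> X" "y \<in> X" by auto
      have "p \<in> Rs ! (r x y)" using p rD[OF p(2,3)] by (simp add: Rs_nth)
      then show "p \<in> \<Union> (set Rs)" using rD[OF p(2,3)] by (metis UnionI length_Rs nth_mem)
    qed
  qed
next
  fix i assume i: "i < length Rs"
  have "converse (Rs ! i) = Rs ! i" using i rsym by (auto simp: Rs_nth)
  then show "\<exists>j<length Rs. converse (Rs ! i) = Rs ! j" using i by blast
next
  fix i j k assume ijk: "i < length Rs" "j < length Rs" "k < length Rs"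
  show "\<exists>p::nat. \<forall>(x, y)\<in>Rs ! k. card {z \<in> X. (x, z) \<in> Rs ! i \<and> (z, y) \<in> Rs ! j} = p"
  proof (intro exI[of _ "pn k i j"] ballI, clarify)
    fix x y assume "(x,y) \<in> Rs ! k"
    then have xy: "x \<in> X" "y \<in> X" "r x y = k" using ijk by (auto simp: Rs_nth)
    have "{z \<in> X. (x, z) \<in> Rs ! i \<and> (z, y) \<in> Rs ! j} = {z\<in>X. r x z = i \<and> r z y = j}"
      using ijk xy by (auto simp: Rs_nth)
    then show "card {z \<in> X. (x, z) \<in> Rs ! i \<and> (z, y) \<in> Rs ! j} = pn k i j"
      using pn[OF xy(1,2)] xy(3) by simp
  qed
qed

definition conv :: "(nat \<Rightarrow> complex) \<Rightarrow> (nat \<Rightarrow> complex) \<Rightarrow> nat \<Rightarrow> complex" where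
  "conv f g k = (\<Sum>a<D. \<Sum>b<D. f a * g b * of_nat (pn k a b))"

definition cmat :: "'a list \<Rightarrow> (nat \<Rightarrow> complex) \<Rightarrow> complex mat" where
  "cmat xs c = kmat xs (\<lambda>x y. c (r x y))"

lemma class_sum:
  assumes "x \<in> X" "y \<in> X"
  shows "(\<Sum>z\<in>X. f (r x z) * g (r z y)) = conv f g (r x y)"
proof -
  have "(\<Sum>z\<in>X. f (r x z) * g (r z y)) = (\<Sum>z\<in>X. \<Sum>a<D. \<Sum>b<D. if r x z = a \<and> r z y = b then f a * g b else 0)"
  proof (rule sum.cong[OF refl])
    fix z assume z: "z \<in> X"
    have "(\<Sum>a<D. \<Sum>b<D. if r x z = a \<and> r z y = b then f a * g b else 0)
        = (\<Sum>a<D. if r x z = a then (\<Sum>b<D. if r z y = b then f a * g b else 0) else 0)"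
      by (rule sum.cong[OF refl]) auto
    also have "\<dots> = (\<Sum>b<D. if r z y = b then f (r x z) * g b else 0)"
      using rD[OF assms(1) z] by (simp add: sum.delta)
    also have "\<dots> = f (r x z) * g (r z y)"
      using rD[OF z assms(2)] by (simp add: sum.delta')
    finally show "f (r x z) * g (r z y) = (\<Sum>a<D. \<Sum>b<D. if r x z = a \<and> r z y = b then f a * g b else 0)" by simp
  qed
  also have "\<dots> = (\<Sum>a<D. \<Sum>z\<in>X. \<Sum>b<D. if r x z = a \<and> r z y = b then f a * g b else 0)"
    by (rule sum.swap)
  also have "\<dots> = (\<Sum>a<D. \<Sum>b<D. \<Sum>z\<in>X. if r x z = a \<and> r z y = b then f a * g b else 0)"
    by (rule sum.cong[OF refl], rule sum.swap)
  also have "\<dots> = (\<Sum>a<D. \<Sum>b<D. of_nat (card {z\<in>X. r x z = a \<and> r z y = b}) * (f a * g b))"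
    by (simp add: sum_if_card[OF fin])
  also have "\<dots> = conv f g (r x y)"
    unfolding conv_def using pn[OF assms] by (simp add: mult_ac)
  finally show ?thesis .
qed

lemma cmat_carrier[simp]: "cmat xs f \<in> carrier_mat (length xs) (length xs)"
  by (simp add: cmat_def)

lemma cmat_dims[simp]: "dim_row (cmat xs f) = length xs" "dim_col (cmat xs f) = length xs"
  by (simp_all add: cmat_def)

context
  fixes xs assumes dxs: "distinct xs" and sxs: "set xs = X"
begin

lemma N_card: "length xs = card X" using dxs sxs distinct_card by metis

lemma cmat_mult: "cmat xs f * cmat xs g = cmat xs (conv f g)"
  unfolding cmat_def kmat_mult[OF dxs] sxs
  by (rule kmat_cong) (simp add: sxs class_sum)

lemma cmat_eq_iff: "cmat xs f = cmat xs g \<longleftrightarrow> (\<forall>k<D. f k = g k)"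
proof
  assume eq: "cmat xs f = cmat xs g"
  show "\<forall>k<D. f k = g k"
  proof (intro allI impI)
    fix k assume "k < D"
    then obtain x y where xy: "x \<in> X" "y \<in> X" "r x y = k" using realized by blast
    then obtain i j where ij: "i < length xs" "j < length xs" "xs!i = x" "xs!j = y"
      using sxs by (metis in_set_conv_nth)
    have "cmat xs f $$ (i,j) = cmat xs g $$ (i,j)" using eq by simp
    then show "f k = g k" using ij xy by (simp add: cmat_def)
  qed
next
  assume "\<forall>k<D. f k = g k"
  then show "cmat xs f = cmat xs g" unfolding cmat_def
    by (intro kmat_cong) (simp add: sxs rD)
qed

lemma cmat_add: "cmat xs f + cmat xs g = cmat xs (\<lambda>k. f k + g k)"
  by (simp add: cmat_def kmat_add)

lemma cmat_smult: "a \<cdot>\<^sub>m cmat xs f = cmat xs (\<lambda>k. a * f k)"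
  by (simp add: cmat_def kmat_smult)

lemma zero_cmat: "0\<^sub>m (length xs) (length xs) = cmat xs (\<lambda>_. 0)"
  by (intro eq_matI) (auto simp: cmat_def)

lemma one_cmat: "1\<^sub>m (length xs) = cmat xs (dlt 0)"
proof (intro eq_matI)
  fix i j assume "i < dim_row (cmat xs (dlt 0))" "j < dim_col (cmat xs (dlt 0))"
  then have ij: "i < length xs" "j < length xs" by auto
  have "xs!i \<in> X" "xs!j \<in> X" using ij sxs by auto
  then have "dlt 0 (r (xs!i) (xs!j)) = (if i = j then 1 else 0)"
    using r0 nth_eq_iff_index_eq[OF dxs ij] by (auto simp: dlt_def)
  then show "1\<^sub>m (length xs) $$ (i,j) = cmat xs (dlt 0) $$ (i,j)" using ij by (simp add: cmat_def)
qed auto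

lemma adj_cmat: "j < D \<Longrightarrow> adj_mat xs (Rs ! j) = cmat xs (dlt j)"
proof (intro eq_matI)
  fix a b assume j: "j < D" and "a < dim_row (cmat xs (dlt j))" "b < dim_col (cmat xs (dlt j))"
  then have ab: "a < length xs" "b < length xs" by auto
  have "xs!a \<in> X" "xs!b \<in> X" using ab sxs by auto
  then show "adj_mat xs (Rs ! j) $$ (a,b) = cmat xs (dlt j) $$ (a,b)"
    using ab j by (simp add: adj_mat_def cmat_def Rs_nth dlt_def)
qed (auto simp: adj_mat_def)

lemma lincomb_adj: "lincomb_mat (length xs) c (map (adj_mat xs) Rs) = cmat xs c"
proof (intro eq_matI)
  fix a b assume "a < dim_row (cmat xs c)" "b < dim_col (cmat xs c)"
  then have ab: "a < length xs" "b < length xs" by auto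
  have xy: "xs!a \<in> X" "xs!b \<in> X" using ab sxs by auto
  have "lincomb_mat (length xs) c (map (adj_mat xs) Rs) $$ (a,b)
      = (\<Sum>k<D. c k * adj_mat xs (Rs ! k) $$ (a,b))"
    using ab by (simp add: lincomb_mat_def)
  also have "\<dots> = (\<Sum>k<D. c k * dlt k (r (xs!a) (xs!b)))"
    using ab by (intro sum.cong refl) (simp add: adj_cmat cmat_def)
  also have "\<dots> = c (r (xs!a) (xs!b))"
    using rD[OF xy] by (simp add: sum_dlt_l)
  finally show "lincomb_mat (length xs) c (map (adj_mat xs) Rs) $$ (a,b) = cmat xs c $$ (a,b)"
    using ab by (simp add: cmat_def)
qed (auto simp: lincomb_mat_def)

lemma bm: "bose_mesner xs Rs = range (cmat xs)"
  unfolding bose_mesner_def using lincomb_adj by auto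

end

lemma conv_dlt2: "b < D \<Longrightarrow> conv f (dlt b) k = (\<Sum>a<D. f a * of_nat (pn k a b))"
proof -
  assume b: "b < D"
  have "\<And>a. (\<Sum>b'<D. f a * dlt b b' * of_nat (pn k a b')) = (\<Sum>b'<D. (f a * of_nat (pn k a b')) * dlt b b')"
    by (rule sum.cong) (simp_all add: mult_ac)
  then show ?thesis unfolding conv_def using b by (simp add: sum_dlt_r)
qed

lemma conv_dlt1: "a < D \<Longrightarrow> conv (dlt a) g k = (\<Sum>b<D. g b * of_nat (pn k a b))"
proof -
  assume a: "a < D"
  have "(\<Sum>a'<D. \<Sum>b<D. dlt a a' * g b * of_nat (pn k a' b)) = (\<Sum>a'<D. (\<Sum>b<D. g b * of_nat (pn k a' b)) * dlt a a')"
    by (rule sum.cong) (simp_all add: mult_ac sum_distrib_left)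
  then show ?thesis unfolding conv_def using a by (simp add: sum_dlt_r)
qed

lemma conv_lin2: "conv f g k = (\<Sum>b<D. g b * conv f (dlt b) k)"
proof -
  have "conv f g k = (\<Sum>b<D. \<Sum>a<D. f a * g b * of_nat (pn k a b))"
    unfolding conv_def by (rule sum.swap)
  also have "\<dots> = (\<Sum>b<D. g b * conv f (dlt b) k)"
    by (rule sum.cong[OF refl]) (simp add: conv_dlt2 sum_distrib_left mult_ac)
  finally show ?thesis .
qed

lemma conv_lin1: "conv f g k = (\<Sum>a<D. f a * conv (dlt a) g k)"
proof -
  have "conv f g k = (\<Sum>a<D. f a * (\<Sum>b<D. g b * of_nat (pn k a b)))"
    unfolding conv_def by (simp add: sum_distrib_left mult_ac)
  also have "\<dots> = (\<Sum>a<D. f a * conv (dlt a) g k)"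
    by (rule sum.cong[OF refl]) (simp add: conv_dlt1)
  finally show ?thesis .
qed

lemma conv_smult1: "conv (\<lambda>k. \<mu> * f k) g = (\<lambda>k. \<mu> * conv f g k)"
  unfolding conv_def by (rule ext) (simp add: sum_distrib_left mult_ac)

lemma conv_smult2: "conv f (\<lambda>k. \<mu> * g k) = (\<lambda>k. \<mu> * conv f g k)"
  unfolding conv_def by (rule ext) (simp add: sum_distrib_left mult_ac)

end


locale ctable = cscheme +
  fixes e :: "nat \<Rightarrow> nat \<Rightarrow> complex" and P :: "int list list" and m :: "nat list"
  assumes H1: "\<And>i k. i < D \<Longrightarrow> k < D \<Longrightarrow> conv (e i) (e i) k = e i k"
  and H2: "\<And>i j k. i < D \<Longrightarrow> j < D \<Longrightarrow> k < D \<Longrightarrow> conv (e i) (dlt j) k = of_int (P!i!j) * e i k"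
  and H3: "\<And>i j k. i < D \<Longrightarrow> j < D \<Longrightarrow> k < D \<Longrightarrow> conv (dlt j) (e i) k = of_int (P!i!j) * e i k"
  and H4: "\<And>j k. j < D \<Longrightarrow> k < D \<Longrightarrow> dlt j k = (\<Sum>i<D. of_int (P!i!j) * e i k)"
  and H5: "\<And>k. k < D \<Longrightarrow> e 0 k = 1 / of_nat (card X)"
  and H6: "\<And>i. i < D \<Longrightarrow> e i 0 \<noteq> 0"
  and H7: "\<And>i i'. i < D \<Longrightarrow> i' < D \<Longrightarrow> i \<noteq> i' \<Longrightarrow> \<exists>k<D. e i k \<noteq> e i' k"
  and H8: "\<And>xs i. distinct xs \<Longrightarrow> set xs = X \<Longrightarrow> i < D \<Longrightarrow> vec_space.rank (length xs) (cmat xs (e i)) \<le> m!i"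
  and H9: "(\<Sum>i<D. m!i) = card X"
  and H10: "\<And>i. i < D \<Longrightarrow> P!i!0 = 1"
begin

context
  fixes xs assumes dxs: "distinct xs" and sxs: "set xs = X"
begin

lemma EF: "i < D \<Longrightarrow> cmat xs (e i) * cmat xs c = cmat xs (\<lambda>k. (\<Sum>b<D. c b * of_int (P!i!b)) * e i k)"
proof -
  assume i: "i < D"
  have "\<forall>k<D. conv (e i) c k = (\<Sum>b<D. c b * of_int (P!i!b)) * e i k"
  proof (intro allI impI)
    fix k assume k: "k < D"
    have "conv (e i) c k = (\<Sum>b<D. c b * conv (e i) (dlt b) k)" by (rule conv_lin2)
    also have "\<dots> = (\<Sum>b<D. (c b * of_int (P!i!b)) * e i k)"
      using i k by (intro sum.cong refl) (simp add: H2)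
    also have "\<dots> = (\<Sum>b<D. c b * of_int (P!i!b)) * e i k" by (simp add: sum_distrib_right)
    finally show "conv (e i) c k = (\<Sum>b<D. c b * of_int (P!i!b)) * e i k" .
  qed
  then show ?thesis unfolding cmat_mult[OF dxs sxs] cmat_eq_iff[OF dxs sxs] .
qed

lemma FE: "i < D \<Longrightarrow> cmat xs c * cmat xs (e i) = cmat xs (\<lambda>k. (\<Sum>a<D. c a * of_int (P!i!a)) * e i k)"
proof -
  assume i: "i < D"
  have "\<forall>k<D. conv c (e i) k = (\<Sum>a<D. c a * of_int (P!i!a)) * e i k"
  proof (intro allI impI)
    fix k assume k: "k < D"
    have "conv c (e i) k = (\<Sum>a<D. c a * conv (dlt a) (e i) k)" by (rule conv_lin1)
    also have "\<dots> = (\<Sum>a<D. (c a * of_int (P!i!a)) * e i k)"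
      using i k by (intro sum.cong refl) (simp add: H3)
    also have "\<dots> = (\<Sum>a<D. c a * of_int (P!i!a)) * e i k" by (simp add: sum_distrib_right)
    finally show "conv c (e i) k = (\<Sum>a<D. c a * of_int (P!i!a)) * e i k" .
  qed
  then show ?thesis unfolding cmat_mult[OF dxs sxs] cmat_eq_iff[OF dxs sxs] .
qed

lemma cmat_e_ne0: "i < D \<Longrightarrow> cmat xs (\<lambda>k. \<mu> * e i k) = cmat xs (\<lambda>k. \<nu> * e i k) \<Longrightarrow> \<mu> = \<nu>"
proof -
  assume i: "i < D" and eq: "cmat xs (\<lambda>k. \<mu> * e i k) = cmat xs (\<lambda>k. \<nu> * e i k)"
  then have "\<mu> * e i 0 = \<nu> * e i 0" using Dpos unfolding cmat_eq_iff[OF dxs sxs] by blast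
  then show "\<mu> = \<nu>" using H6[OF i] by simp
qed

lemma E_idem: "i < D \<Longrightarrow> cmat xs (e i) * cmat xs (e i) = cmat xs (e i)"
  unfolding cmat_mult[OF dxs sxs] cmat_eq_iff[OF dxs sxs] by (simp add: H1)

lemma E_ne0: "i < D \<Longrightarrow> cmat xs (e i) \<noteq> 0\<^sub>m (length xs) (length xs)"
proof -
  assume i: "i < D"
  show ?thesis unfolding zero_cmat[OF dxs sxs] cmat_eq_iff[OF dxs sxs] using Dpos H6[OF i] by blast
qed

lemma idem_scalar:
  assumes i: "i < D" and FF: "cmat xs c * cmat xs c = cmat xs c"
  shows "(\<Sum>b<D. c b * of_int (P!i!b)) = 0 \<or> (\<Sum>b<D. c b * of_int (P!i!b)) = 1"
proof -
  define \<mu> where "\<mu> = (\<Sum>b<D. c b * of_int (P!i!b))"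
  have "cmat xs (e i) * (cmat xs c * cmat xs c) = cmat xs (e i) * cmat xs c" using FF by simp
  also have "\<dots> = cmat xs (\<lambda>k. \<mu> * e i k)" using EF[OF i] \<mu>_def by simp
  finally have 1: "cmat xs (e i) * (cmat xs c * cmat xs c) = cmat xs (\<lambda>k. \<mu> * e i k)" .
  have "cmat xs (e i) * (cmat xs c * cmat xs c) = (cmat xs (e i) * cmat xs c) * cmat xs c"
    by (rule assoc_mult_mat[symmetric]) auto
  also have "\<dots> = cmat xs (\<lambda>k. \<mu> * e i k) * cmat xs c" using EF[OF i] \<mu>_def by simp
  also have "\<dots> = cmat xs (\<lambda>k. \<mu> * conv (e i) c k)"
    unfolding cmat_mult[OF dxs sxs] by (simp add: conv_smult1)
  also have "\<dots> = cmat xs (\<lambda>k. (\<mu> * \<mu>) * e i k)"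
  proof -
    have "cmat xs (conv (e i) c) = cmat xs (\<lambda>k. \<mu> * e i k)"
      using EF[OF i] \<mu>_def cmat_mult[OF dxs sxs] by simp
    then have "\<forall>k<D. conv (e i) c k = \<mu> * e i k" unfolding cmat_eq_iff[OF dxs sxs] .
    then show ?thesis unfolding cmat_eq_iff[OF dxs sxs] by simp
  qed
  finally have "\<mu> * \<mu> = \<mu>" using 1 cmat_e_ne0[OF i, of "\<mu> * \<mu>" \<mu>] by simp
  then have "\<mu> * (\<mu> - 1) = 0" by (simp add: algebra_simps)
  then show ?thesis unfolding \<mu>_def[symmetric] by auto
qed

lemma E_prim: "i < D \<Longrightarrow> primitive_idempotent (bose_mesner xs Rs) (cmat xs (e i))"
proof -
  assume i: "i < D"
  show ?thesis unfolding primitive_idempotent_def bm[OF dxs sxs]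
  proof (intro conjI ballI impI)
    show "cmat xs (e i) \<in> range (cmat xs)" by simp
    show "cmat xs (e i) * cmat xs (e i) = cmat xs (e i)" using E_idem[OF i] .
    show "cmat xs (e i) \<noteq> 0\<^sub>m (dim_row (cmat xs (e i))) (dim_col (cmat xs (e i)))"
      using E_ne0[OF i] by simp
    fix F assume F: "F \<in> range (cmat xs)" and FF: "F * F = F"
    then obtain c where c: "F = cmat xs c" by auto
    have "(\<Sum>b<D. c b * of_int (P!i!b)) = 0 \<or> (\<Sum>b<D. c b * of_int (P!i!b)) = 1"
      using idem_scalar[OF i] FF c by simp
    then show "cmat xs (e i) * F = 0\<^sub>m (dim_row (cmat xs (e i))) (dim_col (cmat xs (e i))) \<or> cmat xs (e i) * F = cmat xs (e i)"
    proof
      assume "(\<Sum>b<D. c b * of_int (P!i!b)) = 0"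
      then have "cmat xs (e i) * F = cmat xs (\<lambda>_. 0)" using EF[OF i] c by simp
      then show ?thesis using zero_cmat[OF dxs sxs] by simp
    next
      assume "(\<Sum>b<D. c b * of_int (P!i!b)) = 1"
      then show ?thesis using EF[OF i] c by simp
    qed
  qed
qed

lemma c_expand: "k < D \<Longrightarrow> c k = (\<Sum>i<D. (\<Sum>a<D. c a * of_int (P!i!a)) * e i k)"
proof -
  assume k: "k < D"
  have "c k = (\<Sum>a<D. c a * dlt a k)" using k by (simp add: sum_dlt_l)
  also have "\<dots> = (\<Sum>a<D. c a * (\<Sum>i<D. of_int (P!i!a) * e i k))"
    using k by (intro sum.cong refl) (simp add: H4)
  also have "\<dots> = (\<Sum>a<D. \<Sum>i<D. c a * of_int (P!i!a) * e i k)"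
    by (simp add: sum_distrib_left mult.assoc)
  also have "\<dots> = (\<Sum>i<D. \<Sum>a<D. c a * of_int (P!i!a) * e i k)"
    by (rule sum.swap)
  also have "\<dots> = (\<Sum>i<D. (\<Sum>a<D. c a * of_int (P!i!a)) * e i k)"
    by (simp add: sum_distrib_right)
  finally show ?thesis .
qed

lemma all_prim:
  assumes E: "primitive_idempotent (bose_mesner xs Rs) E"
  shows "\<exists>i<D. E = cmat xs (e i)"
proof -
  have Eal: "E \<in> range (cmat xs)" and EE: "E * E = E"
    and En0': "E \<noteq> 0\<^sub>m (dim_row E) (dim_col E)"
    and prim: "\<And>F. F \<in> range (cmat xs) \<Longrightarrow> F * F = F \<Longrightarrow> E * F = 0\<^sub>m (dim_row E) (dim_col E) \<or> E * F = E"
    using E unfolding primitive_idempotent_def bm[OF dxs sxs] by auto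
  from Eal obtain c where c: "E = cmat xs c" by auto
  have En0: "E \<noteq> 0\<^sub>m (length xs) (length xs)" using En0' c by simp
  define \<nu> where "\<nu> i = (\<Sum>a<D. c a * of_int (P!i!a))" for i
  have "\<exists>i<D. \<nu> i \<noteq> 0"
  proof (rule ccontr)
    assume "\<not> (\<exists>i<D. \<nu> i \<noteq> 0)"
    then have "\<forall>k<D. c k = 0"
    proof (intro allI impI)
      fix k assume k: "k < D" and h: "\<not> (\<exists>i<D. \<nu> i \<noteq> 0)"
      have "c k = (\<Sum>i<D. (\<Sum>a<D. c a * of_int (P!i!a)) * e i k)" using c_expand[OF k] .
      also have "\<dots> = (\<Sum>i<D. \<nu> i * e i k)" by (simp add: \<nu>_def)
      also have "\<dots> = 0" using h by simp
      finally show "c k = 0" .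
    qed
    then have "E = cmat xs (\<lambda>_. 0)" using c cmat_eq_iff[OF dxs sxs] by simp
    then show False using En0 zero_cmat[OF dxs sxs] by simp
  qed
  then obtain i where i: "i < D" "\<nu> i \<noteq> 0" by blast
  have EEi: "E * cmat xs (e i) = cmat xs (\<lambda>k. \<nu> i * e i k)" using FE[OF i(1)] c \<nu>_def by simp
  have "E * cmat xs (e i) \<noteq> 0\<^sub>m (length xs) (length xs)"
  proof
    assume "E * cmat xs (e i) = 0\<^sub>m (length xs) (length xs)"
    then have "cmat xs (\<lambda>k. \<nu> i * e i k) = cmat xs (\<lambda>k. 0 * e i k)" using EEi zero_cmat[OF dxs sxs] by simp
    then show False using cmat_e_ne0[OF i(1)] i(2) by blast
  qed
  then have "E * cmat xs (e i) = E" using prim[of "cmat xs (e i)"] E_idem[OF i(1)] c by auto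
  then have E1: "E = cmat xs (\<lambda>k. \<nu> i * e i k)" using EEi by simp
  have "E * E = cmat xs (\<lambda>k. \<nu> i * (\<nu> i * e i k))"
    unfolding E1 cmat_mult[OF dxs sxs] cmat_eq_iff[OF dxs sxs] conv_smult1 conv_smult2
    using H1[OF i(1)] by simp
  then have "cmat xs (\<lambda>k. (\<nu> i * \<nu> i) * e i k) = cmat xs (\<lambda>k. \<nu> i * e i k)"
    using EE E1 by (simp add: mult.assoc)
  then have "\<nu> i * \<nu> i = \<nu> i" using cmat_e_ne0[OF i(1)] by blast
  then have "\<nu> i = 1" using i(2) by simp
  then have "E = cmat xs (e i)" using E1 by simp
  then show ?thesis using i(1) by blast
qed

lemma sum_E: "cmat xs (\<lambda>k. \<Sum>i<D. e i k) = 1\<^sub>m (length xs)"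
  unfolding one_cmat[OF dxs sxs] cmat_eq_iff[OF dxs sxs]
  using H4[of 0] H10 Dpos by simp

lemma rank_sum_cmat: "vec_space.rank (length xs) (cmat xs (\<lambda>k. \<Sum>i<n. e i k)) \<le> (\<Sum>i<n. vec_space.rank (length xs) (cmat xs (e i)))"
proof (induction n)
  case 0
  have "cmat xs (\<lambda>k. \<Sum>i<0. e i k) = 0\<^sub>m (length xs) (length xs)" using zero_cmat[OF dxs sxs] by simp
  then show ?case by (simp add: vec_space.rank_0I)
next
  case (Suc n)
  have "cmat xs (\<lambda>k. \<Sum>i<Suc n. e i k) = cmat xs (\<lambda>k. \<Sum>i<n. e i k) + cmat xs (e n)"
    using cmat_add[OF dxs sxs] by simp
  then have "vec_space.rank (length xs) (cmat xs (\<lambda>k. \<Sum>i<Suc n. e i k))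
     \<le> vec_space.rank (length xs) (cmat xs (\<lambda>k. \<Sum>i<n. e i k)) + vec_space.rank (length xs) (cmat xs (e n))"
    using vec_space.rank_subadditive[OF cmat_carrier cmat_carrier] by metis
  then show ?case using Suc by simp
qed

lemma ranks: "i < D \<Longrightarrow> vec_space.rank (length xs) (cmat xs (e i)) = m!i"
proof -
  assume i: "i < D"
  define rk where "rk j = vec_space.rank (length xs) (cmat xs (e j))" for j
  have le: "\<And>j. j < D \<Longrightarrow> rk j \<le> m!j" using H8[OF dxs sxs] rk_def by simp
  have "vec_space.rank (length xs) ((1\<^sub>m (length xs) :: complex mat)) = length xs"
    using vec_space.det_rank_iff[of "1\<^sub>m (length xs)" "length xs"] by simp
  then have "length xs = vec_space.rank (length xs) (1\<^sub>m (length xs) :: complex mat)" by (rule sym)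
  also have "\<dots> \<le> (\<Sum>j<D. rk j)" using rank_sum_cmat[of D] sum_E rk_def by simp
  finally have ge: "card X \<le> (\<Sum>j<D. rk j)" using N_card[OF dxs sxs] by simp
  show ?thesis
  proof (rule ccontr)
    assume "vec_space.rank (length xs) (cmat xs (e i)) \<noteq> m!i"
    then have "rk i < m!i" using le[OF i] rk_def by fastforce
    then have "(\<Sum>j<D. rk j) < (\<Sum>j<D. m!j)"
      using i le by (intro sum_strict_mono_ex1) auto
    then show False using ge H9 by simp
  qed
qed

end

theorem char_table: "has_char_table X Rs P m"
  unfolding has_char_table_def Let_def
proof (intro allI impI)
  fix xs assume xs: "distinct xs \<and> set xs = X"
  then have dxs: "distinct xs" and sxs: "set xs = X" by auto
  define Es where "Es = map (\<lambda>i. cmat xs (e i)) [0..<D]"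
  show "\<exists>Es. length Es = length Rs \<and> distinct Es \<and>
          Es ! 0 = mat (length xs) (length xs) (\<lambda>_. 1 / of_nat (length xs)) \<and>
          (\<forall>i<length Rs. primitive_idempotent (bose_mesner xs Rs) (Es ! i)) \<and>
          (\<forall>E. primitive_idempotent (bose_mesner xs Rs) E \<longrightarrow> E \<in> set Es) \<and>
          (\<forall>j<length Rs. adj_mat xs (Rs ! j) = lincomb_mat (length xs) (\<lambda>i. of_int (P ! i ! j)) Es) \<and>
          (\<forall>i<length Rs. vec_space.rank (length xs) (Es ! i) = m ! i)"
  proof (intro exI[of _ Es] conjI allI impI)
    show "length Es = length Rs" by (simp add: Es_def)
    show "distinct Es" unfolding Es_def distinct_map
    proof
      show "distinct [0..<D]" by simp
      show "inj_on (\<lambda>i. cmat xs (e i)) (set [0..<D])"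
      proof (rule inj_onI)
        fix i i' assume "i \<in> set [0..<D]" "i' \<in> set [0..<D]" "cmat xs (e i) = cmat xs (e i')"
        then show "i = i'" using H7 cmat_eq_iff[OF dxs sxs] by fastforce
      qed
    qed
    show "Es ! 0 = mat (length xs) (length xs) (\<lambda>_. 1 / of_nat (length xs))"
    proof -
      have "Es ! 0 = cmat xs (e 0)" using Dpos by (simp add: Es_def)
      also have "\<dots> = cmat xs (\<lambda>_. 1 / of_nat (length xs))"
        unfolding cmat_eq_iff[OF dxs sxs] using H5 N_card[OF dxs sxs] by simp
      also have "\<dots> = mat (length xs) (length xs) (\<lambda>_. 1 / of_nat (length xs))"
        by (intro eq_matI) (auto simp: cmat_def)
      finally show ?thesis .
    qed
    fix i assume "i < length Rs"
    then have i: "i < D" by simp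
    show "primitive_idempotent (bose_mesner xs Rs) (Es ! i)" using E_prim[OF dxs sxs i] i by (simp add: Es_def)
  next
    fix E assume "primitive_idempotent (bose_mesner xs Rs) E"
    then obtain i where "i < D" "E = cmat xs (e i)" using all_prim[OF dxs sxs] by blast
    then show "E \<in> set Es" by (auto simp: Es_def)
  next
    fix j assume "j < length Rs"
    then have j: "j < D" by simp
    have "lincomb_mat (length xs) (\<lambda>i. of_int (P ! i ! j)) Es = cmat xs (\<lambda>k. \<Sum>i<D. of_int (P ! i ! j) * e i k)"
    proof (intro eq_matI)
      fix a b assume "a < dim_row (cmat xs (\<lambda>k. \<Sum>i<D. of_int (P ! i ! j) * e i k))"
        "b < dim_col (cmat xs (\<lambda>k. \<Sum>i<D. of_int (P ! i ! j) * e i k))"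
      then have ab: "a < length xs" "b < length xs" by auto
      then show "lincomb_mat (length xs) (\<lambda>i. of_int (P ! i ! j)) Es $$ (a, b) = cmat xs (\<lambda>k. \<Sum>i<D. of_int (P ! i ! j) * e i k) $$ (a, b)"
        by (simp add: lincomb_mat_def Es_def cmat_def)
    qed (auto simp: lincomb_mat_def)
    also have "\<dots> = cmat xs (dlt j)" unfolding cmat_eq_iff[OF dxs sxs] using j H4 by simp
    finally show "adj_mat xs (Rs ! j) = lincomb_mat (length xs) (\<lambda>i. of_int (P ! i ! j)) Es"
      using adj_cmat[OF dxs sxs j] by simp
  next
    fix i assume "i < length Rs"
    then have i: "i < D" by simp
    show "vec_space.rank (length xs) (Es ! i) = m ! i" using ranks[OF dxs sxs i] i by (simp add: Es_def)
  qed
qed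

end

definition r_of :: "gf4 list \<Rightarrow> gf4 list \<Rightarrow> nat" where
  "r_of x y = (if y = x then 0 else if y = smult_vec4 A4 x then 1 else if y = smult_vec4 B4 x then 2 else
     (case herm x y of O4 \<Rightarrow> 3 | A4 \<Rightarrow> 4 | B4 \<Rightarrow> 5 | Z4 \<Rightarrow> 6))"

definition relP :: "nat \<Rightarrow> gf4 list \<Rightarrow> gf4 list \<Rightarrow> bool" where
  "relP l x y = (if l < 3 then y = smult_vec4 (alpha ^ l) x else herm x y = alpha ^ l)"

lemma Rel_eq: "Rel n l = {(x,y). x \<in> Phi n \<and> y \<in> Phi n \<and> relP l x y}"
  by (auto simp: Rel_def relP_def)

lemma Rel_r_of:
  assumes "\<forall>x\<in>Phi n. \<forall>y\<in>Phi n. r_of x y < 6 \<and> (\<forall>l<6. relP l x y = (r_of x y = l))" "l < 6"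
  shows "Rel n l = {(x,y). x \<in> Phi n \<and> y \<in> Phi n \<and> r_of x y = l}"
  using assms unfolding Rel_eq by auto

definition act :: "gf4 list \<Rightarrow> nat \<Rightarrow> gf4 list \<Rightarrow> gf4 list" where
  "act d j x = rotate j (map2 (*) d x)"

lemma gf4_cube: "a \<noteq> 0 \<Longrightarrow> a * (a * a) = (1::gf4)"
  by (cases a) (auto simp: zero_gf4_def one_gf4_def)

lemma herm_Cons: "herm (a # x) (b # y) = a * b^2 + herm x y"
  by (simp add: herm_def)

lemma gf4_cube2: "c \<noteq> 0 \<Longrightarrow> c * a * (c * b)^2 = a * (b::gf4)^2"
  by (cases a; cases b; cases c) (simp_all add: power2_eq_square zero_gf4_def)

lemma herm_diag0:
  fixes d :: "gf4 list"
  shows "length d = length x \<Longrightarrow> length x = length y \<Longrightarrow> (\<forall>a\<in>set d. a \<noteq> 0) \<Longrightarrow>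
   herm (map2 (*) d x) (map2 (*) d y) = herm x y"
proof (induction d x y rule: list_induct3)
  case Nil then show ?case by (simp add: herm_def)
next
  case (Cons c d a x b y)
  have c: "c \<noteq> 0" and dd: "\<forall>a\<in>set d. a \<noteq> 0" using Cons.prems by auto
  have "herm (map2 (*) (c # d) (a # x)) (map2 (*) (c # d) (b # y)) = c * a * (c * b)^2 + herm (map2 (*) d x) (map2 (*) d y)"
    by (simp only: list.map zip_Cons_Cons prod.case herm_Cons)
  also have "\<dots> = a * b^2 + herm x y" using gf4_cube2[OF c] Cons.IH[OF dd] by simp
  also have "\<dots> = herm (a # x) (b # y)" by (simp only: herm_Cons)
  finally show ?case .
qed

lemma herm_diag:
  "length d = length x \<Longrightarrow> length d = length y \<Longrightarrow> (\<forall>a\<in>set d. a \<noteq> 0) \<Longrightarrow>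
   herm (map2 (*) d x) (map2 (*) d y) = herm x y"
  by (rule herm_diag0) auto

lemma zip_rotate1: "length u = length v \<Longrightarrow> zip (rotate1 u) (rotate1 v) = rotate1 (zip u v)"
  by (cases u; cases v) auto

lemma zip_rotate: "length u = length v \<Longrightarrow> zip (rotate j u) (rotate j v) = rotate j (zip u v)"
  by (induction j) (auto simp: zip_rotate1)

lemma sum_list_rotate1: "sum_list (rotate1 (xs :: 'b :: comm_monoid_add list)) = sum_list xs"
  by (cases xs) (auto simp: add.commute)

lemma sum_list_rotate: "sum_list (rotate j (xs :: 'b :: comm_monoid_add list)) = sum_list xs"
  by (induction j) (auto simp: sum_list_rotate1)

lemma herm_rotate: "length x = length y \<Longrightarrow> herm (rotate j x) (rotate j y) = herm x y"
proof -
  assume "length x = length y"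
  then have "map2 (\<lambda>a b. a * b ^ 2) (rotate j x) (rotate j y) = rotate j (map2 (\<lambda>a b. a * b ^ 2) x y)"
    by (simp add: zip_rotate rotate_map)
  then show ?thesis by (simp add: herm_def sum_list_rotate)
qed

lemma rotate_inj: "rotate j u = rotate j v \<Longrightarrow> u = v"
proof (induction j)
  case 0 then show ?case by simp
next
  case (Suc j)
  have "rotate1 (rotate j u) = rotate1 (rotate j v)" using Suc.prems by simp
  then have "rotate j u = rotate j v" using inj_eq[OF inj_rotate1] by blast
  then show ?case using Suc.IH by blast
qed

lemma gf4_cancel: "(a::gf4) \<noteq> 0 \<Longrightarrow> a * b = a * c \<Longrightarrow> b = c"
  by (cases a; cases b; cases c) (auto simp: zero_gf4_def)

lemma diag_inj0:
  fixes d :: "gf4 list"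
  shows "length d = length x \<Longrightarrow> length x = length y \<Longrightarrow> (\<forall>a\<in>set d. a \<noteq> 0) \<Longrightarrow>
   map2 (*) d x = map2 (*) d y \<Longrightarrow> x = y"
proof (induction d x y rule: list_induct3)
  case Nil then show ?case by simp
next
  case (Cons a d b x c y)
  have a: "a \<noteq> 0" and ab: "a * b = a * c" and t: "map2 (*) d x = map2 (*) d y" using Cons.prems by auto
  have "b = c" using gf4_cancel[OF a ab] .
  moreover have "x = y" using Cons.IH Cons.prems t by auto
  ultimately show ?case by simp
qed

lemma diag_inj:
  fixes d :: "gf4 list"
  shows "length d = length x \<Longrightarrow> length d = length y \<Longrightarrow> (\<forall>a\<in>set d. a \<noteq> 0) \<Longrightarrow>
   map2 (*) d x = map2 (*) d y \<Longrightarrow> x = y"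
  by (rule diag_inj0) auto

lemma act_len[simp]: "length d = length x \<Longrightarrow> length (act d j x) = length x"
  by (simp add: act_def)

lemma act_inj:
  "length d = length x \<Longrightarrow> length d = length y \<Longrightarrow> (\<forall>a\<in>set d. a \<noteq> 0) \<Longrightarrow>
   act d j x = act d j y \<longleftrightarrow> x = y"
  unfolding act_def using rotate_inj diag_inj by metis

lemma act_smult: "act d j (smult_vec4 c x) = smult_vec4 c (act d j x)"
proof -
  have "map2 (*) d (map ((*) c) x) = map ((*) c) (map2 (*) d x)"
  proof (induction d arbitrary: x)
    case Nil then show ?case by simp
  next
    case (Cons a d) then show ?case by (cases x) (simp_all add: mult.left_commute[of a c])
  qed
  then show ?thesis by (simp add: act_def smult_vec4_def rotate_map)
qed

lemma act_herm:
  "length d = length x \<Longrightarrow> length d = length y \<Longrightarrow> (\<forall>a\<in>set d. a \<noteq> 0) \<Longrightarrow>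
   herm (act d j x) (act d j y) = herm x y"
  unfolding act_def by (simp add: herm_rotate herm_diag)

lemma smult_len[simp]: "length (smult_vec4 c x) = length x" by (simp add: smult_vec4_def)

lemma r_of_act:
  assumes "length d = length x" "length d = length y" "\<forall>a\<in>set d. a \<noteq> 0"
  shows "r_of (act d j x) (act d j y) = r_of x y"
proof -
  have e1: "act d j y = act d j x \<longleftrightarrow> y = x" using act_inj assms by metis
  have e2: "\<And>c. act d j y = smult_vec4 c (act d j x) \<longleftrightarrow> y = smult_vec4 c x"
    using act_inj[of d y "smult_vec4 _ x"] assms by (simp add: act_smult[symmetric])
  show ?thesis unfolding r_of_def e1 e2 act_herm[OF assms] ..
qed

lemma rotate_replicate': "rotate j (replicate n a) = replicate n a"
  by (induction j) auto

lemma act_zero: "length d = n \<Longrightarrow> act d j (replicate n 0) = replicate n 0"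
proof -
  assume "length d = n"
  then have "map2 (*) d (replicate n (0::gf4)) = replicate n 0"
    by (intro nth_equalityI) auto
  then show ?thesis by (simp add: act_def rotate_replicate')
qed

lemma act_Phi:
  assumes "length d = n" "\<forall>a\<in>set d. a \<noteq> 0" "x \<in> Phi n"
  shows "act d j x \<in> Phi n"
proof -
  have lx: "length x = n" and nz: "x \<noteq> replicate n 0" and hx: "herm x x = 0" using assms(3) by (auto simp: Phi_def)
  have "act d j x \<noteq> act d j (replicate n 0)"
    using act_inj[of d x "replicate n 0" j] assms(1,2) lx nz by simp
  then have "act d j x \<noteq> replicate n 0" using act_zero[OF assms(1)] by simp
  moreover have "herm (act d j x) (act d j x) = 0" using act_herm[of d x x j] assms lx hx by simp
  ultimately show ?thesis using lx assms(1) by (simp add: Phi_def)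
qed

lemma act_bij:
  assumes "length d = n" "\<forall>a\<in>set d. a \<noteq> 0" "finite (Phi n)"
  shows "bij_betw (act d j) (Phi n) (Phi n)"
proof -
  have inj: "inj_on (act d j) (Phi n)"
    by (rule inj_onI) (use act_inj assms in \<open>auto simp: Phi_def\<close>)
  have "act d j ` Phi n \<subseteq> Phi n" using act_Phi assms by auto
  then have "act d j ` Phi n = Phi n" using endo_inj_surj assms(3) inj by blast
  then show ?thesis using inj by (simp add: bij_betw_def)
qed

lemma count_transport:
  assumes fin: "finite X" and x0: "x0 \<in> X"
  and trans: "\<And>x. x \<in> X \<Longrightarrow> \<exists>\<sigma>. bij_betw \<sigma> X X \<and> (\<forall>u\<in>X. \<forall>v\<in>X. r (\<sigma> u) (\<sigma> v) = r u v) \<and> \<sigma> x0 = x"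
  and base: "\<And>y a b. y \<in> X \<Longrightarrow> card {z\<in>X. r x0 z = a \<and> r z y = b} = pn (r x0 y) a b"
  and x: "x \<in> X" and y: "y \<in> X"
  shows "card {z\<in>X. r x z = a \<and> r z y = b} = pn (r x y) a b"
proof -
  obtain \<sigma> where b: "bij_betw \<sigma> X X" and inv: "\<forall>u\<in>X. \<forall>v\<in>X. r (\<sigma> u) (\<sigma> v) = r u v" and sx: "\<sigma> x0 = x"
    using trans[OF x] by blast
  obtain y' where y': "y' \<in> X" "\<sigma> y' = y" using b y by (metis bij_betw_iff_bijections)
  have "{z\<in>X. r x z = a \<and> r z y = b} = \<sigma> ` {z\<in>X. r x0 z = a \<and> r z y' = b}"
  proof
    show "\<sigma> ` {z\<in>X. r x0 z = a \<and> r z y' = b} \<subseteq> {z\<in>X. r x z = a \<and> r z y = b}"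
      using b inv sx y' x0 by (auto simp: bij_betw_def)
    show "{z\<in>X. r x z = a \<and> r z y = b} \<subseteq> \<sigma> ` {z\<in>X. r x0 z = a \<and> r z y' = b}"
    proof
      fix z assume z: "z \<in> {z\<in>X. r x z = a \<and> r z y = b}"
      then obtain z' where z': "z' \<in> X" "\<sigma> z' = z" using b by (metis (no_types, lifting) bij_betw_iff_bijections mem_Collect_eq)
      then show "z \<in> \<sigma> ` {z\<in>X. r x0 z = a \<and> r z y' = b}" using z inv sx y' x0 by force
    qed
  qed
  moreover have "inj_on \<sigma> {z\<in>X. r x0 z = a \<and> r z y' = b}"
    using b by (auto simp: bij_betw_def intro: inj_on_subset)
  ultimately have "card {z\<in>X. r x z = a \<and> r z y = b} = card {z\<in>X. r x0 z = a \<and> r z y' = b}"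
    by (simp add: card_image)
  also have "\<dots> = pn (r x0 y') a b" using base[OF y'(1)] .
  also have "r x0 y' = r x y" using inv x0 y' sx by metis
  finally show ?thesis .
qed

lemma count_filter:
  assumes "distinct L" "\<And>z. z \<in> set L \<Longrightarrow> rr z y = rr y z"
  shows "card {z\<in>set L. rr x0 z = a \<and> rr z y = b}
       = length (filter (\<lambda>(u,v). u = a \<and> v = b) (zip (map (rr x0) L) (map (rr y) L)))"
proof -
  have "card {z\<in>set L. rr x0 z = a \<and> rr z y = b} = card {z\<in>set L. rr x0 z = a \<and> rr y z = b}"
    using assms(2) by (metis)
  also have "\<dots> = length (filter (\<lambda>z. rr x0 z = a \<and> rr y z = b) L)"
    using distinct_length_filter[OF assms(1)] by (simp add: Collect_conj_eq Int_commute)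
  also have "\<dots> = length (filter (\<lambda>(u,v). u = a \<and> v = b) (zip (map (rr x0) L) (map (rr y) L)))"
    by (simp add: zip_map_map zip_same_conv_map filter_map o_def)
  finally show ?thesis .
qed

lemma assemble_cs:
  fixes L :: "gf4 list list" and W :: "(gf4 list \<times> nat) list" and F :: "nat \<Rightarrow> nat"
  assumes PhiL: "Phi n = set L" and dist: "distinct L" and Lne: "L \<noteq> []"
  and Wok: "list_all2 (\<lambda>(d,j) x. act d j (hd L) = x) W L"
  and Wd: "\<forall>(d,j)\<in>set W. length d = n \<and> (\<forall>a\<in>set d. a \<noteq> 0)"
  and FD: "\<And>k. F k < D"
  and F0: "\<And>k. F k = 0 \<longleftrightarrow> k = 0"
  and realized: "\<forall>k<D. \<exists>x\<in>set L. \<exists>y\<in>set L. F (r_of x y) = k"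
  and symm: "\<forall>x\<in>set L. \<forall>y\<in>set L. F (r_of y x) = F (r_of x y)"
  and cnt: "\<forall>y\<in>set L. \<forall>a<D. \<forall>b<D. length (filter (\<lambda>(u,v). u = a \<and> v = b)
              (zip (map (\<lambda>z. F (r_of (hd L) z)) L) (map (\<lambda>z. F (r_of y z)) L))) = pnF (F (r_of (hd L) y)) a b"
  and pn0: "\<And>k a b. D \<le> a \<or> D \<le> b \<Longrightarrow> pnF k a b = 0"
  shows "cscheme (Phi n) (\<lambda>x y. F (r_of x y)) D pnF"
proof -
  define r where "r = (\<lambda>x y. F (r_of x y))"
  have fin: "finite (Phi n)" using PhiL by simp
  have Dpos: "0 < D" using FD[of 0] by simp
  have x0: "hd L \<in> Phi n" using PhiL Lne by simp
  have base: "card {z\<in>Phi n. r (hd L) z = a \<and> r z y = b} = pnF (r (hd L) y) a b" if y: "y \<in> Phi n" for y a b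
  proof (cases "a < D \<and> b < D")
    case True
    have "card {z\<in>set L. r (hd L) z = a \<and> r z y = b}
       = length (filter (\<lambda>(u,v). u = a \<and> v = b) (zip (map (r (hd L)) L) (map (r y) L)))"
      by (rule count_filter[OF dist]) (use symm y PhiL in \<open>auto simp: r_def\<close>)
    also have "\<dots> = pnF (r (hd L) y) a b" using cnt y PhiL True by (simp add: r_def)
    finally show ?thesis using PhiL by simp
  next
    case False
    then have e: "{z\<in>Phi n. r (hd L) z = a \<and> r z y = b} = {}" using FD by (auto simp: r_def)
    have "D \<le> a \<or> D \<le> b" using False by linarith
    then have "pnF (r (hd L) y) a b = 0" using pn0 by blast
    then show ?thesis by (simp only: e card.empty)
  qed
  have trans: "\<exists>\<sigma>. bij_betw \<sigma> (Phi n) (Phi n) \<and> (\<forall>u\<in>Phi n. \<forall>v\<in>Phi n. r (\<sigma> u) (\<sigma> v) = r u v) \<and> \<sigma> (hd L) = x"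
    if x: "x \<in> Phi n" for x
  proof -
    obtain i where i: "i < length L" "L ! i = x" using x PhiL by (metis in_set_conv_nth)
    have lW: "length W = length L" using Wok list_all2_lengthD by blast
    obtain d j where dj: "W ! i = (d,j)" by (cases "W ! i")
    have "(d,j) \<in> set W" using dj i lW by (metis nth_mem)
    then have d: "length d = n" "\<forall>a\<in>set d. a \<noteq> 0" using Wd by auto
    have "act d j (hd L) = x" using list_all2_nthD[OF Wok, of i] i dj lW by simp
    moreover have "bij_betw (act d j) (Phi n) (Phi n)" using act_bij[OF d fin] .
    moreover have "\<forall>u\<in>Phi n. \<forall>v\<in>Phi n. r (act d j u) (act d j v) = r u v"
      using r_of_act d by (auto simp: r_def Phi_def)
    ultimately show ?thesis by blast
  qed
  show ?thesis unfolding r_def[symmetric]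
  proof
    show "finite (Phi n)" by (rule fin)
    show "0 < D" by (rule Dpos)
    fix x y assume xy: "x \<in> Phi n" "y \<in> Phi n"
    show "r x y < D" by (simp add: r_def FD)
    show "r x y = 0 \<longleftrightarrow> x = y" by (simp add: r_def F0 r_of_def split: gf4.split)
    show "r y x = r x y" using symm xy PhiL by (simp add: r_def)
    fix a b
    show "card {z\<in>Phi n. r x z = a \<and> r z y = b} = pnF (r x y) a b"
      by (rule count_transport[OF fin x0 trans base xy]) auto
  next
    fix k assume "k < D"
    then show "\<exists>x\<in>Phi n. \<exists>y\<in>Phi n. r x y = k" using realized PhiL by (simp add: r_def)
  qed
qed

lemma sum_list_map2: "length S = length v \<Longrightarrow> sum_list (map2 f S v) = (\<Sum>t<length S. f (S!t) (v!t))"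
  by (simp add: sum_list_sum_nth atLeast0LessThan)

definition idx :: "'a list \<Rightarrow> 'a \<Rightarrow> nat" where
  "idx L y = (SOME j. j < length L \<and> L ! j = y)"

lemma idx: "y \<in> set L \<Longrightarrow> idx L y < length L \<and> L ! idx L y = y"
  unfolding idx_def by (rule someI_ex) (metis in_set_conv_nth)

lemma decomp_glue:
  fixes K :: "gf4 list \<Rightarrow> gf4 list \<Rightarrow> int"
  assumes chk: "\<forall>(y,v)\<in>set (zip L V). \<forall>x\<in>set L. K x y = sum_list (map2 (\<lambda>s c. K x s * c) S v)"
  and lv: "\<forall>v\<in>set V. length v = length S" and lV: "length V = length L"
  and x: "x \<in> set L" and y: "y \<in> set L"
  shows "(of_int (K x y) :: complex) / M = (\<Sum>t<length S. (of_int (K x (S!t)) / M) * of_int ((V ! idx L y) ! t))"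
proof -
  define j where "j = idx L y"
  have j: "j < length L" "L ! j = y" using idx[OF y] by (simp_all add: j_def)
  have "(y, V ! j) \<in> set (zip L V)" using j lV by (metis in_set_zip fst_conv snd_conv)
  then have "K x y = sum_list (map2 (\<lambda>s c. K x s * c) S (V ! j))" using chk x by auto
  also have "\<dots> = (\<Sum>t<length S. K x (S!t) * (V!j)!t)"
    using lv j lV by (intro sum_list_map2) (metis nth_mem)
  finally have "(of_int (K x y) :: complex) = (\<Sum>t<length S. of_int (K x (S!t)) * of_int ((V!j)!t))" by simp
  then show ?thesis by (simp add: j_def sum_divide_distrib)
qed


lemma (in cscheme) ctable_int:
  fixes Q :: "int list list" and M :: nat
  assumes Mpos: "0 < M"
  and I1: "\<forall>i<D. \<forall>k<D. (\<Sum>a<D. \<Sum>b<D. Q!a!i * Q!b!i * int (pn k a b)) = int M * Q!k!i"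
  and I2: "\<forall>i<D. \<forall>j<D. \<forall>k<D. (\<Sum>a<D. Q!a!i * int (pn k a j)) = P!i!j * Q!k!i"
  and I3: "\<forall>i<D. \<forall>j<D. \<forall>k<D. (\<Sum>b<D. Q!b!i * int (pn k j b)) = P!i!j * Q!k!i"
  and I4: "\<forall>j<D. \<forall>k<D. (if k = j then int M else 0) = (\<Sum>i<D. P!i!j * Q!k!i)"
  and I5: "\<forall>k<D. Q!k!0 * int (card X) = int M"
  and I6: "\<forall>i<D. Q!0!i \<noteq> 0"
  and I7: "\<forall>i<D. \<forall>i'<D. i \<noteq> i' \<longrightarrow> (\<exists>k<D. Q!k!i \<noteq> Q!k!i')"
  and I8: "\<And>xs i. distinct xs \<Longrightarrow> set xs = X \<Longrightarrow> i < D \<Longrightarrow>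
     vec_space.rank (length xs) (kmat xs (\<lambda>x y. of_int (Q!(r x y)!i) / of_nat M)) \<le> m!i"
  and I9: "(\<Sum>i<D. m!i) = card X"
  and I10: "\<forall>i<D. P!i!0 = 1"
  shows "has_char_table X Rs P m"
proof -
  define e where "e = (\<lambda>i k. (of_int (Q!k!i) :: complex) / of_nat M)"
  have M0: "(of_nat M :: complex) \<noteq> 0" using Mpos by simp
  interpret ct: ctable X r D pn e P m
  proof
    fix i k assume ik: "i < D" "k < D"
    have "conv (e i) (e i) k = (\<Sum>a<D. \<Sum>b<D. of_int (Q!a!i * Q!b!i * int (pn k a b)) / (of_nat M * of_nat M))"
      unfolding conv_def e_def by (intro sum.cong refl) simp
    also have "\<dots> = of_int (\<Sum>a<D. \<Sum>b<D. Q!a!i * Q!b!i * int (pn k a b)) / (of_nat M * of_nat M)"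
      by (simp add: sum_divide_distrib)
    also have "\<dots> = e i k" using I1 ik M0 by (simp add: e_def)
    finally show "conv (e i) (e i) k = e i k" .
  next
    fix i j k assume ijk: "i < D" "j < D" "k < D"
    have "conv (e i) (dlt j) k = of_int (\<Sum>a<D. Q!a!i * int (pn k a j)) / of_nat M"
      using ijk by (simp add: conv_dlt2 e_def sum_divide_distrib)
    also have "\<dots> = of_int (P!i!j) * e i k" using I2 ijk by (simp add: e_def)
    finally show "conv (e i) (dlt j) k = of_int (P!i!j) * e i k" .
  next
    fix i j k assume ijk: "i < D" "j < D" "k < D"
    have "conv (dlt j) (e i) k = of_int (\<Sum>b<D. Q!b!i * int (pn k j b)) / of_nat M"
      using ijk by (simp add: conv_dlt1 e_def sum_divide_distrib)
    also have "\<dots> = of_int (P!i!j) * e i k" using I3 ijk by (simp add: e_def)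
    finally show "conv (dlt j) (e i) k = of_int (P!i!j) * e i k" .
  next
    fix j k assume jk: "j < D" "k < D"
    have "(\<Sum>i<D. of_int (P!i!j) * e i k) = of_int (\<Sum>i<D. P!i!j * Q!k!i) / of_nat M"
      by (simp add: e_def sum_divide_distrib)
    also have "\<dots> = of_int (if k = j then int M else 0) / of_nat M" using I4 jk by simp
    also have "\<dots> = dlt j k" using M0 by (simp add: dlt_def)
    finally show "dlt j k = (\<Sum>i<D. of_int (P!i!j) * e i k)" by simp
  next
    fix k assume k: "k < D"
    have "of_int (Q!k!0 * int (card X)) = (of_nat M :: complex)" using I5 k by (metis of_int_of_nat_eq)
    then have "of_int (Q!k!0) * of_nat (card X) = (of_nat M :: complex)" by simp
    moreover have "(of_nat (card X) :: complex) \<noteq> 0" using I5 k Mpos by (metis mult_zero_right of_nat_0 of_nat_0_less_iff of_int_of_nat_eq less_irrefl of_nat_eq_0_iff)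
    ultimately show "e 0 k = 1 / of_nat (card X)" using M0 unfolding e_def
      by (simp add: field_simps)
  next
    fix i assume "i < D"
    then show "e i 0 \<noteq> 0" using I6 M0 by (simp add: e_def)
  next
    fix i i' assume "i < D" "i' < D" "i \<noteq> i'"
    then obtain k where "k < D" "Q!k!i \<noteq> Q!k!i'" using I7 by blast
    then show "\<exists>k<D. e i k \<noteq> e i' k" using M0 by (auto simp: e_def)
  next
    fix xs i assume "distinct xs" "set xs = X" "i < D"
    then show "vec_space.rank (length xs) (cmat xs (e i)) \<le> m!i"
      using I8 by (simp add: cmat_def e_def)
  next
    show "(\<Sum>i<D. m!i) = card X" by (rule I9)
  next
    fix i assume "i < D" then show "P!i!0 = 1" using I10 by simp
  qed
  show ?thesis by (rule ct.char_table)
qed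


lemma Phi_filter: "Phi n = set (filter (\<lambda>x. x \<noteq> replicate n 0 \<and> herm x x = 0) (List.n_lists n [Z4,O4,A4,B4]))"
proof -
  have "set [Z4,O4,A4,B4] = UNIV" using gf4.exhaust by auto
  then show ?thesis by (auto simp: Phi_def set_n_lists)
qed

lemma all_upt: "(\<forall>i<n. P i) \<longleftrightarrow> (\<forall>i\<in>set [0..<n]. P i)" by auto
lemma ex_upt: "(\<exists>i<n. P i) \<longleftrightarrow> (\<exists>i\<in>set [0..<n]. P i)" by auto
lemma sum_upt: "(\<Sum>i<n. f i) = sum_list (map f [0..<n])"
  by (simp add: sum_list_distinct_conv_sum_set atLeast0LessThan)

definition f4 :: "nat \<Rightarrow> nat" where "f4 k = (if k = 0 then 0 else if k \<le> 2 then 1 else if k = 3 then 2 else 3)"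
definition f2 :: "nat \<Rightarrow> nat" where "f2 k = (if k = 0 then 0 else if k \<le> 2 then 1 else 2)"

lemma rels4:
  assumes R: "\<forall>x\<in>Phi n. \<forall>y\<in>Phi n. r_of x y < 6 \<and> (\<forall>l<6. relP l x y = (r_of x y = l))"
  shows "[Rel n 0, Rel n 1 \<union> Rel n 2, Rel n 3, Rel n 4 \<union> Rel n 5] = relsof (Phi n) (\<lambda>x y. f4 (r_of x y)) 4"
proof -
  have R6: "\<And>x y. x \<in> Phi n \<Longrightarrow> y \<in> Phi n \<Longrightarrow> r_of x y < 6" using R by blast
  have up: "[0..<4] = [0,1,2,3::nat]" by (simp add: upt_rec)
  show ?thesis unfolding relsof_def up
    apply (auto simp: Rel_r_of[OF R] f4_def split: if_splits)
    apply (frule (1) R6, linarith)+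
    done
qed

lemma rels3:
  assumes R: "\<forall>x\<in>Phi n. \<forall>y\<in>Phi n. r_of x y < 6 \<and> (\<forall>l<6. relP l x y = (r_of x y = l))"
  shows "[Rel n 0, Rel n 1 \<union> Rel n 2, Rel n 3 \<union> Rel n 4 \<union> Rel n 5] = relsof (Phi n) (\<lambda>x y. f2 (r_of x y)) 3"
proof -
  have R6: "\<And>x y. x \<in> Phi n \<Longrightarrow> y \<in> Phi n \<Longrightarrow> r_of x y < 6" using R by blast
  have up: "[0..<3] = [0,1,2::nat]" by (simp add: upt_rec)
  show ?thesis unfolding relsof_def up
    apply (auto simp: Rel_r_of[OF R] f2_def split: if_splits)
    apply (frule (1) R6, linarith)+
    done
qed

lemma rank_from_decomp:
  fixes K :: "gf4 list \<Rightarrow> gf4 list \<Rightarrow> int" and G :: "gf4 list \<Rightarrow> gf4 list \<Rightarrow> complex"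
  assumes chk: "\<forall>(y,v)\<in>set (zip L V). \<forall>x\<in>set L. K x y = sum_list (map2 (\<lambda>s c. K x s * c) S v)"
  and lv: "\<forall>v\<in>set V. length v = length S" and lV: "length V = length L"
  and sx: "set xs = set L" and m: "length S \<le> m"
  and G: "\<And>x y. x \<in> set L \<Longrightarrow> y \<in> set L \<Longrightarrow> G x y = of_int (K x y) / M"
  shows "vec_space.rank (length xs) (kmat xs G) \<le> m"
proof -
  have "vec_space.rank (length xs) (kmat xs G) \<le> length S"
  proof (rule rank_kmat_decomp)
    fix x y assume "x \<in> set xs" "y \<in> set xs"
    then have xy: "x \<in> set L" "y \<in> set L" using sx by auto
    show "G x y = (\<Sum>t<length S. (of_int (K x (S!t)) / M) * of_int ((V ! idx L y) ! t))"
      using G[OF xy] decomp_glue[OF chk lv lV xy] by simp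
  qed
  then show ?thesis using m by simp
qed

lemma rank_const:
  assumes "\<And>x y. x \<in> set xs \<Longrightarrow> y \<in> set xs \<Longrightarrow> G x y = c"
  shows "vec_space.rank (length xs) (kmat xs G) \<le> 1"
proof -
  have "vec_space.rank (length xs) (kmat xs G) \<le> 1"
    by (rule rank_kmat_decomp[where u="\<lambda>t x. c" and v="\<lambda>t y. 1"]) (simp add: assms)
  then show ?thesis .
qed

definition L2 :: "gf4 list list" where "L2 = [[O4,O4], [O4,A4], [O4,B4], [A4,O4], [A4,A4], [A4,B4], [B4,O4], [B4,A4], [B4,B4]]"
definition W2 :: "(gf4 list \<times> nat) list" where "W2 = [([O4,O4], 0), ([O4,A4], 0), ([O4,B4], 0), ([O4,A4], 1), ([A4,A4], 0), ([A4,B4], 0), ([O4,B4], 1), ([A4,B4], 1), ([B4,B4], 0)]"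
definition PN4_2 :: "nat list list" where "PN4_2 = [[1, 0, 0, 0, 0, 2, 0, 0, 0, 0, 2, 0, 0, 0, 0, 4], [0, 1, 0, 0, 1, 1, 0, 0, 0, 0, 0, 2, 0, 0, 2, 2], [0, 0, 1, 0, 0, 0, 0, 2, 1, 0, 1, 0, 0, 2, 0, 2], [0, 0, 0, 1, 0, 0, 1, 1, 0, 1, 0, 1, 1, 1, 1, 1]]"
definition pn4_2 :: "nat \<Rightarrow> nat \<Rightarrow> nat \<Rightarrow> nat" where "pn4_2 k a b = (if a < 4 \<and> b < 4 then PN4_2 ! k ! (4 * a + b) else 0)"
definition Q4_2 :: "int list list" where "Q4_2 = [[2, 4, 4, 8], [2, -2, 4, -4], [2, 4, -2, -4], [2, -2, -2, 2]]"
definition S1_2 :: "gf4 list list" where "S1_2 = [[O4,O4], [O4,A4]]"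
definition V1_2 :: "int list list" where "V1_2 = [[1, 0], [0, 1], [-1, -1], [0, 1], [-1, -1], [1, 0], [-1, -1], [1, 0], [0, 1]]"
definition S2_2 :: "gf4 list list" where "S2_2 = [[O4,O4], [O4,A4]]"
definition V2_2 :: "int list list" where "V2_2 = [[1, 0], [0, 1], [-1, -1], [-1, -1], [1, 0], [0, 1], [0, 1], [-1, -1], [1, 0]]"
definition S3_2 :: "gf4 list list" where "S3_2 = [[O4,O4], [O4,A4], [O4,B4], [A4,O4]]"
definition V3_2 :: "int list list" where "V3_2 = [[1, 0, 0, 0], [0, 1, 0, 0], [0, 0, 1, 0], [0, 0, 0, 1], [-1, 1, 0, 1], [-1, 0, 1, 1], [1, -1, -1, -1], [0, 0, -1, -1], [0, -1, 0, -1]]"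
definition PN3_2 :: "nat list list" where "PN3_2 = [[1, 0, 0, 0, 2, 0, 0, 0, 6], [0, 1, 0, 1, 1, 0, 0, 0, 6], [0, 0, 1, 0, 0, 2, 1, 2, 3]]"
definition pn3_2 :: "nat \<Rightarrow> nat \<Rightarrow> nat \<Rightarrow> nat" where "pn3_2 k a b = (if a < 3 \<and> b < 3 then PN3_2 ! k ! (3 * a + b) else 0)"
definition Q3_2 :: "int list list" where "Q3_2 = [[2, 4, 12], [2, 4, -6], [2, -2, 0]]"

lemma Phi2: "Phi 2 = set L2"
proof -
  have "set (filter (\<lambda>x. x \<noteq> replicate 2 0 \<and> herm x x = 0) (List.n_lists 2 [Z4,O4,A4,B4])) = set L2"
    by code_simp
  then show ?thesis using Phi_filter[of 2] by simp
qed

lemma dist2: "distinct L2" by code_simp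

lemma card2: "card (Phi 2) = 9"
proof -
  have "length L2 = 9" by (simp add: L2_def)
  then show ?thesis using Phi2 dist2 distinct_card by metis
qed

lemma relc2: "\<forall>x\<in>set L2. \<forall>y\<in>set L2. r_of x y < 6 \<and> (\<forall>l\<in>set [0..<6]. relP l x y = (r_of x y = l))"
  by code_simp

lemma rel2: "\<forall>x\<in>Phi 2. \<forall>y\<in>Phi 2. r_of x y < 6 \<and> (\<forall>l<6. relP l x y = (r_of x y = l))"
  unfolding Phi2 all_upt using relc2 .

lemma Wok2: "list_all2 (\<lambda>(d,j) x. act d j (hd L2) = x) W2 L2" by code_simp

lemma Wd2: "\<forall>(d,j)\<in>set W2. length d = 2 \<and> (\<forall>a\<in>set d. a \<noteq> 0)" by code_simp

lemma sym2: "\<forall>x\<in>set L2. \<forall>y\<in>set L2. f4 (r_of y x) = f4 (r_of x y) \<and> f2 (r_of y x) = f2 (r_of x y)"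
  by code_simp

lemma Lne2: "L2 \<noteq> []" by (simp add: L2_def)

lemma real4_2: "\<forall>k\<in>set [0..<4]. \<exists>x\<in>set L2. \<exists>y\<in>set L2. f4 (r_of x y) = k" by code_simp

lemma cnt4_2: "\<forall>y\<in>set L2. \<forall>a\<in>set [0..<4]. \<forall>b\<in>set [0..<4]. length (filter (\<lambda>(u,v). u = a \<and> v = b)
    (zip (map (\<lambda>z. f4 (r_of (hd L2) z)) L2) (map (\<lambda>z. f4 (r_of y z)) L2))) = pn4_2 (f4 (r_of (hd L2) y)) a b"
  by code_simp

lemma cs4_2: "cscheme (Phi 2) (\<lambda>x y. f4 (r_of x y)) 4 pn4_2"
proof (rule assemble_cs[OF Phi2 dist2 Lne2 Wok2 Wd2])
  show "\<And>k. f4 k < 4" by (simp add: f4_def)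
  show "\<And>k. f4 k = 0 \<longleftrightarrow> k = 0" by (simp add: f4_def)
  show "\<forall>k<4. \<exists>x\<in>set L2. \<exists>y\<in>set L2. f4 (r_of x y) = k" unfolding all_upt by (rule real4_2)
  show "\<forall>x\<in>set L2. \<forall>y\<in>set L2. f4 (r_of y x) = f4 (r_of x y)" using sym2 by blast
  show "\<forall>y\<in>set L2. \<forall>a<4. \<forall>b<4. length (filter (\<lambda>(u,v). u = a \<and> v = b)
    (zip (map (\<lambda>z. f4 (r_of (hd L2) z)) L2) (map (\<lambda>z. f4 (r_of y z)) L2))) = pn4_2 (f4 (r_of (hd L2) y)) a b"
    unfolding all_upt by (rule cnt4_2)
  show "\<And>k a b. 4 \<le> a \<or> 4 \<le> b \<Longrightarrow> pn4_2 k a b = 0" by (auto simp: pn4_2_def)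
qed

lemma I1_4_2: "\<forall>i<4. \<forall>k<4. (\<Sum>a<4. \<Sum>b<4. Q4_2!a!i * Q4_2!b!i * int (pn4_2 k a b)) = int 18 * Q4_2!k!i"
  unfolding all_upt sum_upt by code_simp
lemma I2_4_2: "\<forall>i<4. \<forall>j<4. \<forall>k<4. (\<Sum>a<4. Q4_2!a!i * int (pn4_2 k a j)) = [[1, 2, 2, 4], [1, -1, 2, -2], [1, 2, -1, -2], [1, -1, -1, 1]]!i!j * Q4_2!k!i"
  unfolding all_upt sum_upt by code_simp
lemma I3_4_2: "\<forall>i<4. \<forall>j<4. \<forall>k<4. (\<Sum>b<4. Q4_2!b!i * int (pn4_2 k j b)) = [[1, 2, 2, 4], [1, -1, 2, -2], [1, 2, -1, -2], [1, -1, -1, 1]]!i!j * Q4_2!k!i"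
  unfolding all_upt sum_upt by code_simp
lemma I4_4_2: "\<forall>j<4. \<forall>k<4. (if k = j then int 18 else 0) = (\<Sum>i<4. [[1, 2, 2, 4], [1, -1, 2, -2], [1, 2, -1, -2], [1, -1, -1, 1]]!i!j * Q4_2!k!i)"
  unfolding all_upt sum_upt by code_simp
lemma I5_4_2: "\<forall>k<4. Q4_2!k!0 * int (card (Phi 2)) = int 18"
  unfolding all_upt card2 by code_simp
lemma I6_4_2: "\<forall>i<4. Q4_2!0!i \<noteq> 0"
  unfolding all_upt by code_simp
lemma I7_4_2: "\<forall>i<4. \<forall>i'<4. i \<noteq> i' \<longrightarrow> (\<exists>k<4. Q4_2!k!i \<noteq> Q4_2!k!i')"
  unfolding all_upt ex_upt by code_simp
lemma I9_4_2: "(\<Sum>i<4. [1, 2, 2, 4]!i) = card (Phi 2)"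
  unfolding sum_upt card2 by code_simp
lemma I10_4_2: "\<forall>i<4. [[1, 2, 2, 4], [1, -1, 2, -2], [1, 2, -1, -2], [1, -1, -1, 1]]!i!0 = (1::int)"
  unfolding all_upt by code_simp

lemma real3_2: "\<forall>k\<in>set [0..<3]. \<exists>x\<in>set L2. \<exists>y\<in>set L2. f2 (r_of x y) = k" by code_simp

lemma cnt3_2: "\<forall>y\<in>set L2. \<forall>a\<in>set [0..<3]. \<forall>b\<in>set [0..<3]. length (filter (\<lambda>(u,v). u = a \<and> v = b)
    (zip (map (\<lambda>z. f2 (r_of (hd L2) z)) L2) (map (\<lambda>z. f2 (r_of y z)) L2))) = pn3_2 (f2 (r_of (hd L2) y)) a b"
  by code_simp

lemma cs3_2: "cscheme (Phi 2) (\<lambda>x y. f2 (r_of x y)) 3 pn3_2"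
proof (rule assemble_cs[OF Phi2 dist2 Lne2 Wok2 Wd2])
  show "\<And>k. f2 k < 3" by (simp add: f2_def)
  show "\<And>k. f2 k = 0 \<longleftrightarrow> k = 0" by (simp add: f2_def)
  show "\<forall>k<3. \<exists>x\<in>set L2. \<exists>y\<in>set L2. f2 (r_of x y) = k" unfolding all_upt by (rule real3_2)
  show "\<forall>x\<in>set L2. \<forall>y\<in>set L2. f2 (r_of y x) = f2 (r_of x y)" using sym2 by blast
  show "\<forall>y\<in>set L2. \<forall>a<3. \<forall>b<3. length (filter (\<lambda>(u,v). u = a \<and> v = b)
    (zip (map (\<lambda>z. f2 (r_of (hd L2) z)) L2) (map (\<lambda>z. f2 (r_of y z)) L2))) = pn3_2 (f2 (r_of (hd L2) y)) a b"
    unfolding all_upt by (rule cnt3_2)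
  show "\<And>k a b. 3 \<le> a \<or> 3 \<le> b \<Longrightarrow> pn3_2 k a b = 0" by (auto simp: pn3_2_def)
qed

lemma I1_3_2: "\<forall>i<3. \<forall>k<3. (\<Sum>a<3. \<Sum>b<3. Q3_2!a!i * Q3_2!b!i * int (pn3_2 k a b)) = int 18 * Q3_2!k!i"
  unfolding all_upt sum_upt by code_simp
lemma I2_3_2: "\<forall>i<3. \<forall>j<3. \<forall>k<3. (\<Sum>a<3. Q3_2!a!i * int (pn3_2 k a j)) = [[1, 2, 6], [1, 2, -3], [1, -1, 0]]!i!j * Q3_2!k!i"
  unfolding all_upt sum_upt by code_simp
lemma I3_3_2: "\<forall>i<3. \<forall>j<3. \<forall>k<3. (\<Sum>b<3. Q3_2!b!i * int (pn3_2 k j b)) = [[1, 2, 6], [1, 2, -3], [1, -1, 0]]!i!j * Q3_2!k!i"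
  unfolding all_upt sum_upt by code_simp
lemma I4_3_2: "\<forall>j<3. \<forall>k<3. (if k = j then int 18 else 0) = (\<Sum>i<3. [[1, 2, 6], [1, 2, -3], [1, -1, 0]]!i!j * Q3_2!k!i)"
  unfolding all_upt sum_upt by code_simp
lemma I5_3_2: "\<forall>k<3. Q3_2!k!0 * int (card (Phi 2)) = int 18"
  unfolding all_upt card2 by code_simp
lemma I6_3_2: "\<forall>i<3. Q3_2!0!i \<noteq> 0"
  unfolding all_upt by code_simp
lemma I7_3_2: "\<forall>i<3. \<forall>i'<3. i \<noteq> i' \<longrightarrow> (\<exists>k<3. Q3_2!k!i \<noteq> Q3_2!k!i')"
  unfolding all_upt ex_upt by code_simp
lemma I9_3_2: "(\<Sum>i<3. [1, 2, 6]!i) = card (Phi 2)"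
  unfolding sum_upt card2 by code_simp
lemma I10_3_2: "\<forall>i<3. [[1, 2, 6], [1, 2, -3], [1, -1, 0]]!i!0 = (1::int)"
  unfolding all_upt by code_simp

lemma chk1_2: "\<forall>(y,v)\<in>set (zip L2 V1_2). \<forall>x\<in>set L2. Q4_2!(f4 (r_of x y))!1 = sum_list (map2 (\<lambda>s c. Q4_2!(f4 (r_of x s))!1 * c) S1_2 v)"
  by code_simp
lemma lv1_2: "\<forall>v\<in>set V1_2. length v = length S1_2" by code_simp
lemma lV1_2: "length V1_2 = length L2" by code_simp
lemma lS1_2: "length S1_2 = 2" by code_simp

lemma chk2_2: "\<forall>(y,v)\<in>set (zip L2 V2_2). \<forall>x\<in>set L2. Q4_2!(f4 (r_of x y))!2 = sum_list (map2 (\<lambda>s c. Q4_2!(f4 (r_of x s))!2 * c) S2_2 v)"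
  by code_simp
lemma lv2_2: "\<forall>v\<in>set V2_2. length v = length S2_2" by code_simp
lemma lV2_2: "length V2_2 = length L2" by code_simp
lemma lS2_2: "length S2_2 = 2" by code_simp

lemma chk3_2: "\<forall>(y,v)\<in>set (zip L2 V3_2). \<forall>x\<in>set L2. Q4_2!(f4 (r_of x y))!3 = sum_list (map2 (\<lambda>s c. Q4_2!(f4 (r_of x s))!3 * c) S3_2 v)"
  by code_simp
lemma lv3_2: "\<forall>v\<in>set V3_2. length v = length S3_2" by code_simp
lemma lV3_2: "length V3_2 = length L2" by code_simp
lemma lS3_2: "length S3_2 = 4" by code_simp

lemma q0_4_2: "\<forall>k<4. Q4_2!k!0 = 2" unfolding all_upt by code_simp
lemma q0_3_2: "\<forall>k<3. Q3_2!k!0 = 2" unfolding all_upt by code_simp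
lemma q21_2: "\<forall>k<6. Q3_2!(f2 k)!1 = Q4_2!(f4 k)!2 \<and> Q3_2!(f2 k)!2 = Q4_2!(f4 k)!1 + Q4_2!(f4 k)!3"
  unfolding all_upt by code_simp

lemma rk4_2:
  assumes xs: "distinct xs" "set xs = Phi 2" and i: "i < 4"
  shows "vec_space.rank (length xs) (kmat xs (\<lambda>x y. of_int (Q4_2!(f4 (r_of x y))!i) / of_nat 18)) \<le> [1, 2, 2, 4]!i"
proof -
  have sx: "set xs = set L2" using xs Phi2 by simp
  consider "i = 0" | "i = 1" | "i = 2" | "i = 3" using i by linarith
  then show ?thesis
  proof cases
    case 1
    have "vec_space.rank (length xs) (kmat xs (\<lambda>x y. of_int (Q4_2!(f4 (r_of x y))!0) / of_nat 18)) \<le> 1"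
      by (rule rank_const[where c="of_int 2 / of_nat 18"]) (use q0_4_2 in \<open>simp add: f4_def\<close>)
    then show ?thesis using 1 by simp
  next
    case 2
    show ?thesis unfolding 2
      by (rule rank_from_decomp[OF chk1_2 lv1_2 lV1_2 sx, where M="of_nat 18"]) (simp_all add: lS1_2)
  next
    case 3
    show ?thesis unfolding 3
      by (rule rank_from_decomp[OF chk2_2 lv2_2 lV2_2 sx, where M="of_nat 18"]) (simp_all add: lS2_2)
  next
    case 4
    show ?thesis unfolding 4
      by (rule rank_from_decomp[OF chk3_2 lv3_2 lV3_2 sx, where M="of_nat 18"]) (simp_all add: lS3_2)
  qed
qed

lemma rk3_2:
  assumes xs: "distinct xs" "set xs = Phi 2" and i: "i < 3"
  shows "vec_space.rank (length xs) (kmat xs (\<lambda>x y. of_int (Q3_2!(f2 (r_of x y))!i) / of_nat 18)) \<le> [1, 2, 6]!i"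
proof -
  have sx: "set xs = set L2" using xs Phi2 by simp
  have r6: "\<And>x y. x \<in> set xs \<Longrightarrow> y \<in> set xs \<Longrightarrow> r_of x y < 6" using relc2 sx by blast
  consider "i = 0" | "i = 1" | "i = 2" using i by linarith
  then show ?thesis
  proof cases
    case 1
    have "vec_space.rank (length xs) (kmat xs (\<lambda>x y. of_int (Q3_2!(f2 (r_of x y))!0) / of_nat 18)) \<le> 1"
      by (rule rank_const[where c="of_int 2 / of_nat 18"]) (use q0_3_2 in \<open>simp add: f2_def\<close>)
    then show ?thesis using 1 by simp
  next
    case 2
    have "kmat xs (\<lambda>x y. of_int (Q3_2!(f2 (r_of x y))!1) / of_nat 18) = kmat xs (\<lambda>x y. of_int (Q4_2!(f4 (r_of x y))!2) / of_nat 18)"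
      by (rule kmat_cong) (use q21_2 r6 in simp)
    moreover have "vec_space.rank (length xs) (kmat xs (\<lambda>x y. of_int (Q4_2!(f4 (r_of x y))!2) / of_nat 18)) \<le> 2"
      using rk4_2[OF xs, of 2] by simp
    ultimately show ?thesis using 2 by simp
  next
    case 3
    have "kmat xs (\<lambda>x y. of_int (Q3_2!(f2 (r_of x y))!2) / of_nat 18) = kmat xs (\<lambda>x y. of_int (Q4_2!(f4 (r_of x y))!1) / of_nat 18 + of_int (Q4_2!(f4 (r_of x y))!3) / of_nat 18)"
      by (rule kmat_cong) (use q21_2 r6 in \<open>simp add: add_divide_distrib\<close>)
    moreover have "vec_space.rank (length xs) (kmat xs (\<lambda>x y. of_int (Q4_2!(f4 (r_of x y))!1) / of_nat 18 + of_int (Q4_2!(f4 (r_of x y))!3) / of_nat 18))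
       \<le> 2 + 4"
      using rank_kmat_add[of xs "\<lambda>x y. of_int (Q4_2!(f4 (r_of x y))!1) / of_nat 18" "\<lambda>x y. of_int (Q4_2!(f4 (r_of x y))!3) / of_nat 18"]
        rk4_2[OF xs, of 1] rk4_2[OF xs, of 3] by simp
    ultimately show ?thesis using 3 by simp
  qed
qed

lemma ct4_2: "has_char_table (Phi 2) (relsof (Phi 2) (\<lambda>x y. f4 (r_of x y)) 4) [[1, 2, 2, 4], [1, -1, 2, -2], [1, 2, -1, -2], [1, -1, -1, 1]] [1, 2, 2, 4]"
  by (rule cscheme.ctable_int[OF cs4_2 _ I1_4_2 I2_4_2 I3_4_2 I4_4_2 I5_4_2 I6_4_2 I7_4_2 rk4_2 I9_4_2 I10_4_2]) simp

lemma ct3_2: "has_char_table (Phi 2) (relsof (Phi 2) (\<lambda>x y. f2 (r_of x y)) 3) [[1, 2, 6], [1, 2, -3], [1, -1, 0]] [1, 2, 6]"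
  by (rule cscheme.ctable_int[OF cs3_2 _ I1_3_2 I2_3_2 I3_3_2 I4_3_2 I5_3_2 I6_3_2 I7_3_2 rk3_2 I9_3_2 I10_3_2]) simp

definition L3 :: "gf4 list list" where "L3 = [[Z4,O4,O4], [Z4,O4,A4], [Z4,O4,B4], [Z4,A4,O4], [Z4,A4,A4], [Z4,A4,B4], [Z4,B4,O4], [Z4,B4,A4], [Z4,B4,B4], [O4,Z4,O4], [O4,Z4,A4], [O4,Z4,B4], [O4,O4,Z4], [O4,A4,Z4], [O4,B4,Z4], [A4,Z4,O4], [A4,Z4,A4], [A4,Z4,B4], [A4,O4,Z4], [A4,A4,Z4], [A4,B4,Z4], [B4,Z4,O4], [B4,Z4,A4], [B4,Z4,B4], [B4,O4,Z4], [B4,A4,Z4], [B4,B4,Z4]]"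
definition W3 :: "(gf4 list \<times> nat) list" where "W3 = [([O4,O4,O4], 0), ([O4,O4,A4], 0), ([O4,O4,B4], 0), ([O4,A4,O4], 0), ([O4,A4,A4], 0), ([O4,A4,B4], 0), ([O4,B4,O4], 0), ([O4,B4,A4], 0), ([O4,B4,B4], 0), ([O4,O4,O4], 2), ([O4,A4,O4], 2), ([O4,B4,O4], 2), ([O4,O4,O4], 1), ([O4,O4,A4], 1), ([O4,O4,B4], 1), ([O4,O4,A4], 2), ([O4,A4,A4], 2), ([O4,B4,A4], 2), ([O4,A4,O4], 1), ([O4,A4,A4], 1), ([O4,A4,B4], 1), ([O4,O4,B4], 2), ([O4,A4,B4], 2), ([O4,B4,B4], 2), ([O4,B4,O4], 1), ([O4,B4,A4], 1), ([O4,B4,B4], 1)]"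
definition PN4_3 :: "nat list list" where "PN4_3 = [[1, 0, 0, 0, 0, 2, 0, 0, 0, 0, 8, 0, 0, 0, 0, 16], [0, 1, 0, 0, 1, 1, 0, 0, 0, 0, 0, 8, 0, 0, 8, 8], [0, 0, 1, 0, 0, 0, 0, 2, 1, 0, 1, 6, 0, 2, 6, 8], [0, 0, 0, 1, 0, 0, 1, 1, 0, 1, 3, 4, 1, 1, 4, 10]]"
definition pn4_3 :: "nat \<Rightarrow> nat \<Rightarrow> nat \<Rightarrow> nat" where "pn4_3 k a b = (if a < 4 \<and> b < 4 then PN4_3 ! k ! (4 * a + b) else 0)"
definition Q4_3 :: "int list list" where "Q4_3 = [[2, 12, 16, 24], [2, -6, 16, -12], [2, -6, -2, 6], [2, 3, -2, -3]]"
definition S1_3 :: "gf4 list list" where "S1_3 = [[Z4,O4,O4], [Z4,O4,A4], [Z4,O4,B4], [Z4,A4,O4], [O4,Z4,O4], [A4,Z4,O4]]"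
definition V1_3 :: "int list list" where "V1_3 = [[1, 0, 0, 0, 0, 0], [0, 1, 0, 0, 0, 0], [0, 0, 1, 0, 0, 0], [0, 0, 0, 1, 0, 0], [-1, 1, 0, 1, 0, 0], [-1, 0, 1, 1, 0, 0], [1, -1, -1, -1, 0, 0], [0, 0, -1, -1, 0, 0], [0, -1, 0, -1, 0, 0], [0, 0, 0, 0, 1, 0], [1, -1, 0, 0, 1, 0], [1, 0, -1, 0, 1, 0], [-1, 0, 0, 0, -1, 0], [0, 0, 0, -1, -1, 0], [-1, 1, 1, 1, -1, 0], [0, 0, 0, 0, 0, 1], [1, -1, 0, 0, 0, 1], [1, 0, -1, 0, 0, 1], [-1, 0, 0, 0, 0, -1], [0, 0, 0, -1, 0, -1], [-1, 1, 1, 1, 0, -1], [-2, 1, 1, 0, -1, -1], [-1, 0, 1, 0, -1, -1], [-1, 1, 0, 0, -1, -1], [1, -1, -1, 0, 1, 1], [2, -1, -1, -1, 1, 1], [1, 0, 0, 1, 1, 1]]"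
definition S2_3 :: "gf4 list list" where "S2_3 = [[Z4,O4,O4], [Z4,O4,A4], [Z4,O4,B4], [O4,Z4,O4], [O4,Z4,A4], [O4,Z4,B4], [O4,O4,Z4], [O4,A4,Z4]]"
definition V2_3 :: "int list list" where "V2_3 = [[1, 0, 0, 0, 0, 0, 0, 0], [0, 1, 0, 0, 0, 0, 0, 0], [0, 0, 1, 0, 0, 0, 0, 0], [0, 0, 1, 0, 0, 0, 0, 0], [1, 0, 0, 0, 0, 0, 0, 0], [0, 1, 0, 0, 0, 0, 0, 0], [0, 1, 0, 0, 0, 0, 0, 0], [0, 0, 1, 0, 0, 0, 0, 0], [1, 0, 0, 0, 0, 0, 0, 0], [0, 0, 0, 1, 0, 0, 0, 0], [0, 0, 0, 0, 1, 0, 0, 0], [0, 0, 0, 0, 0, 1, 0, 0], [0, 0, 0, 0, 0, 0, 1, 0], [0, 0, 0, 0, 0, 0, 0, 1], [-1, -1, -1, -1, -1, -1, -1, -1], [0, 0, 0, 0, 0, 1, 0, 0], [0, 0, 0, 1, 0, 0, 0, 0], [0, 0, 0, 0, 1, 0, 0, 0], [-1, -1, -1, -1, -1, -1, -1, -1], [0, 0, 0, 0, 0, 0, 1, 0], [0, 0, 0, 0, 0, 0, 0, 1], [0, 0, 0, 0, 1, 0, 0, 0], [0, 0, 0, 0, 0, 1, 0, 0], [0, 0, 0, 1, 0, 0, 0, 0], [0, 0, 0, 0, 0, 0, 0, 1], [-1, -1, -1, -1, -1, -1, -1, -1], [0, 0, 0, 0, 0, 0, 1, 0]]"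
definition S3_3 :: "gf4 list list" where "S3_3 = [[Z4,O4,O4], [Z4,O4,A4], [Z4,O4,B4], [Z4,A4,O4], [Z4,A4,A4], [Z4,A4,B4], [O4,Z4,O4], [O4,Z4,A4], [O4,Z4,B4], [O4,O4,Z4], [O4,A4,Z4], [A4,Z4,O4]]"
definition V3_3 :: "int list list" where "V3_3 = [[1, 0, 0, 0, 0, 0, 0, 0, 0, 0, 0, 0], [0, 1, 0, 0, 0, 0, 0, 0, 0, 0, 0, 0], [0, 0, 1, 0, 0, 0, 0, 0, 0, 0, 0, 0], [0, 0, 0, 1, 0, 0, 0, 0, 0, 0, 0, 0], [0, 0, 0, 0, 1, 0, 0, 0, 0, 0, 0, 0], [0, 0, 0, 0, 0, 1, 0, 0, 0, 0, 0, 0], [0, -1, 0, 0, 0, -1, 0, 0, 0, 0, 0, 0], [0, 0, -1, -1, 0, 0, 0, 0, 0, 0, 0, 0], [-1, 0, 0, 0, -1, 0, 0, 0, 0, 0, 0, 0], [0, 0, 0, 0, 0, 0, 1, 0, 0, 0, 0, 0], [0, 0, 0, 0, 0, 0, 0, 1, 0, 0, 0, 0], [0, 0, 0, 0, 0, 0, 0, 0, 1, 0, 0, 0], [0, 0, 0, 0, 0, 0, 0, 0, 0, 1, 0, 0], [0, 0, 0, 0, 0, 0, 0, 0, 0, 0, 1, 0], [0, 0, 0, 0, 0, 0, 1, 1, 1, -1, -1, 0], [0, 0, 0, 0, 0, 0, 0, 0, 0, 0, 0, 1], [0, 1, -1, -1, 1, 0, 0, -1, 1, 0, 0, 1], [-1,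 1, 0, -1, 0, 1, 1, -1, 0, 0, 0, 1], [0, 1, 0, -1, 0, 0, 0, -1, 0, 0, 1, 1], [0, 1, 0, 0, 1, 1, 1, 0, 1, -1, -1, 1], [-1, 0, -1, -1, 0, 0, 0, -1, 0, 1, 0, 1], [1, -1, 0, 1, 0, -1, -1, 0, 0, 0, 0, -1], [0, 0, 0, 0, 0, 0, 0, 0, -1, 0, 0, -1], [0, -1, 1, 1, -1, 0, -1, 1, -1, 0, 0, -1], [1, 0, 1, 1, 0, 0, 0, 1, 0, -1, -1, -1], [0, -1, 0, 1, 0, 0, -1, 0, -1, 1, 0, -1], [0, -1, 0, 0, -1, -1, -1, 0, -1, 0, 1, -1]]"
definition PN3_3 :: "nat list list" where "PN3_3 = [[1, 0, 0, 0, 2, 0, 0, 0, 24], [0, 1, 0, 1, 1, 0, 0, 0, 24], [0, 0, 1, 0, 0, 2, 1, 2, 21]]"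
definition pn3_3 :: "nat \<Rightarrow> nat \<Rightarrow> nat \<Rightarrow> nat" where "pn3_3 k a b = (if a < 3 \<and> b < 3 then PN3_3 ! k ! (3 * a + b) else 0)"
definition Q3_3 :: "int list list" where "Q3_3 = [[2, 16, 36], [2, 16, -18], [2, -2, 0]]"

lemma Phi3: "Phi 3 = set L3"
proof -
  have "set (filter (\<lambda>x. x \<noteq> replicate 3 0 \<and> herm x x = 0) (List.n_lists 3 [Z4,O4,A4,B4])) = set L3"
    by code_simp
  then show ?thesis using Phi_filter[of 3] by simp
qed

lemma dist3: "distinct L3" by code_simp

lemma card3: "card (Phi 3) = 27"
proof -
  have "length L3 = 27" by (simp add: L3_def)
  then show ?thesis using Phi3 dist3 distinct_card by metis
qed

lemma relc3: "\<forall>x\<in>set L3. \<forall>y\<in>set L3. r_of x y < 6 \<and> (\<forall>l\<in>set [0..<6]. relP l x y = (r_of x y = l))"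
  by code_simp

lemma rel3: "\<forall>x\<in>Phi 3. \<forall>y\<in>Phi 3. r_of x y < 6 \<and> (\<forall>l<6. relP l x y = (r_of x y = l))"
  unfolding Phi3 all_upt using relc3 .

lemma Wok3: "list_all2 (\<lambda>(d,j) x. act d j (hd L3) = x) W3 L3" by code_simp

lemma Wd3: "\<forall>(d,j)\<in>set W3. length d = 3 \<and> (\<forall>a\<in>set d. a \<noteq> 0)" by code_simp

lemma sym3: "\<forall>x\<in>set L3. \<forall>y\<in>set L3. f4 (r_of y x) = f4 (r_of x y) \<and> f2 (r_of y x) = f2 (r_of x y)"
  by code_simp

lemma Lne3: "L3 \<noteq> []" by (simp add: L3_def)

lemma real4_3: "\<forall>k\<in>set [0..<4]. \<exists>x\<in>set L3. \<exists>y\<in>set L3. f4 (r_of x y) = k" by code_simp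

lemma cnt4_3: "\<forall>y\<in>set L3. \<forall>a\<in>set [0..<4]. \<forall>b\<in>set [0..<4]. length (filter (\<lambda>(u,v). u = a \<and> v = b)
    (zip (map (\<lambda>z. f4 (r_of (hd L3) z)) L3) (map (\<lambda>z. f4 (r_of y z)) L3))) = pn4_3 (f4 (r_of (hd L3) y)) a b"
  by code_simp

lemma cs4_3: "cscheme (Phi 3) (\<lambda>x y. f4 (r_of x y)) 4 pn4_3"
proof (rule assemble_cs[OF Phi3 dist3 Lne3 Wok3 Wd3])
  show "\<And>k. f4 k < 4" by (simp add: f4_def)
  show "\<And>k. f4 k = 0 \<longleftrightarrow> k = 0" by (simp add: f4_def)
  show "\<forall>k<4. \<exists>x\<in>set L3. \<exists>y\<in>set L3. f4 (r_of x y) = k" unfolding all_upt by (rule real4_3)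
  show "\<forall>x\<in>set L3. \<forall>y\<in>set L3. f4 (r_of y x) = f4 (r_of x y)" using sym3 by blast
  show "\<forall>y\<in>set L3. \<forall>a<4. \<forall>b<4. length (filter (\<lambda>(u,v). u = a \<and> v = b)
    (zip (map (\<lambda>z. f4 (r_of (hd L3) z)) L3) (map (\<lambda>z. f4 (r_of y z)) L3))) = pn4_3 (f4 (r_of (hd L3) y)) a b"
    unfolding all_upt by (rule cnt4_3)
  show "\<And>k a b. 4 \<le> a \<or> 4 \<le> b \<Longrightarrow> pn4_3 k a b = 0" by (auto simp: pn4_3_def)
qed

lemma I1_4_3: "\<forall>i<4. \<forall>k<4. (\<Sum>a<4. \<Sum>b<4. Q4_3!a!i * Q4_3!b!i * int (pn4_3 k a b)) = int 54 * Q4_3!k!i"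
  unfolding all_upt sum_upt by code_simp
lemma I2_4_3: "\<forall>i<4. \<forall>j<4. \<forall>k<4. (\<Sum>a<4. Q4_3!a!i * int (pn4_3 k a j)) = [[1, 2, 8, 16], [1, -1, -4, 4], [1, 2, -1, -2], [1, -1, 2, -2]]!i!j * Q4_3!k!i"
  unfolding all_upt sum_upt by code_simp
lemma I3_4_3: "\<forall>i<4. \<forall>j<4. \<forall>k<4. (\<Sum>b<4. Q4_3!b!i * int (pn4_3 k j b)) = [[1, 2, 8, 16], [1, -1, -4, 4], [1, 2, -1, -2], [1, -1, 2, -2]]!i!j * Q4_3!k!i"
  unfolding all_upt sum_upt by code_simp
lemma I4_4_3: "\<forall>j<4. \<forall>k<4. (if k = j then int 54 else 0) = (\<Sum>i<4. [[1, 2, 8, 16], [1, -1, -4, 4], [1, 2, -1, -2], [1, -1, 2, -2]]!i!j * Q4_3!k!i)"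
  unfolding all_upt sum_upt by code_simp
lemma I5_4_3: "\<forall>k<4. Q4_3!k!0 * int (card (Phi 3)) = int 54"
  unfolding all_upt card3 by code_simp
lemma I6_4_3: "\<forall>i<4. Q4_3!0!i \<noteq> 0"
  unfolding all_upt by code_simp
lemma I7_4_3: "\<forall>i<4. \<forall>i'<4. i \<noteq> i' \<longrightarrow> (\<exists>k<4. Q4_3!k!i \<noteq> Q4_3!k!i')"
  unfolding all_upt ex_upt by code_simp
lemma I9_4_3: "(\<Sum>i<4. [1, 6, 8, 12]!i) = card (Phi 3)"
  unfolding sum_upt card3 by code_simp
lemma I10_4_3: "\<forall>i<4. [[1, 2, 8, 16], [1, -1, -4, 4], [1, 2, -1, -2], [1, -1, 2, -2]]!i!0 = (1::int)"
  unfolding all_upt by code_simp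

lemma real3_3: "\<forall>k\<in>set [0..<3]. \<exists>x\<in>set L3. \<exists>y\<in>set L3. f2 (r_of x y) = k" by code_simp

lemma cnt3_3: "\<forall>y\<in>set L3. \<forall>a\<in>set [0..<3]. \<forall>b\<in>set [0..<3]. length (filter (\<lambda>(u,v). u = a \<and> v = b)
    (zip (map (\<lambda>z. f2 (r_of (hd L3) z)) L3) (map (\<lambda>z. f2 (r_of y z)) L3))) = pn3_3 (f2 (r_of (hd L3) y)) a b"
  by code_simp

lemma cs3_3: "cscheme (Phi 3) (\<lambda>x y. f2 (r_of x y)) 3 pn3_3"
proof (rule assemble_cs[OF Phi3 dist3 Lne3 Wok3 Wd3])
  show "\<And>k. f2 k < 3" by (simp add: f2_def)
  show "\<And>k. f2 k = 0 \<longleftrightarrow> k = 0" by (simp add: f2_def)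
  show "\<forall>k<3. \<exists>x\<in>set L3. \<exists>y\<in>set L3. f2 (r_of x y) = k" unfolding all_upt by (rule real3_3)
  show "\<forall>x\<in>set L3. \<forall>y\<in>set L3. f2 (r_of y x) = f2 (r_of x y)" using sym3 by blast
  show "\<forall>y\<in>set L3. \<forall>a<3. \<forall>b<3. length (filter (\<lambda>(u,v). u = a \<and> v = b)
    (zip (map (\<lambda>z. f2 (r_of (hd L3) z)) L3) (map (\<lambda>z. f2 (r_of y z)) L3))) = pn3_3 (f2 (r_of (hd L3) y)) a b"
    unfolding all_upt by (rule cnt3_3)
  show "\<And>k a b. 3 \<le> a \<or> 3 \<le> b \<Longrightarrow> pn3_3 k a b = 0" by (auto simp: pn3_3_def)
qed

lemma I1_3_3: "\<forall>i<3. \<forall>k<3. (\<Sum>a<3. \<Sum>b<3. Q3_3!a!i * Q3_3!b!i * int (pn3_3 k a b)) = int 54 * Q3_3!k!i"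
  unfolding all_upt sum_upt by code_simp
lemma I2_3_3: "\<forall>i<3. \<forall>j<3. \<forall>k<3. (\<Sum>a<3. Q3_3!a!i * int (pn3_3 k a j)) = [[1, 2, 24], [1, 2, -3], [1, -1, 0]]!i!j * Q3_3!k!i"
  unfolding all_upt sum_upt by code_simp
lemma I3_3_3: "\<forall>i<3. \<forall>j<3. \<forall>k<3. (\<Sum>b<3. Q3_3!b!i * int (pn3_3 k j b)) = [[1, 2, 24], [1, 2, -3], [1, -1, 0]]!i!j * Q3_3!k!i"
  unfolding all_upt sum_upt by code_simp
lemma I4_3_3: "\<forall>j<3. \<forall>k<3. (if k = j then int 54 else 0) = (\<Sum>i<3. [[1, 2, 24], [1, 2, -3], [1, -1, 0]]!i!j * Q3_3!k!i)"
  unfolding all_upt sum_upt by code_simp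
lemma I5_3_3: "\<forall>k<3. Q3_3!k!0 * int (card (Phi 3)) = int 54"
  unfolding all_upt card3 by code_simp
lemma I6_3_3: "\<forall>i<3. Q3_3!0!i \<noteq> 0"
  unfolding all_upt by code_simp
lemma I7_3_3: "\<forall>i<3. \<forall>i'<3. i \<noteq> i' \<longrightarrow> (\<exists>k<3. Q3_3!k!i \<noteq> Q3_3!k!i')"
  unfolding all_upt ex_upt by code_simp
lemma I9_3_3: "(\<Sum>i<3. [1, 8, 18]!i) = card (Phi 3)"
  unfolding sum_upt card3 by code_simp
lemma I10_3_3: "\<forall>i<3. [[1, 2, 24], [1, 2, -3], [1, -1, 0]]!i!0 = (1::int)"
  unfolding all_upt by code_simp

lemma chk1_3: "\<forall>(y,v)\<in>set (zip L3 V1_3). \<forall>x\<in>set L3. Q4_3!(f4 (r_of x y))!1 = sum_list (map2 (\<lambda>s c. Q4_3!(f4 (r_of x s))!1 * c) S1_3 v)"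
  by code_simp
lemma lv1_3: "\<forall>v\<in>set V1_3. length v = length S1_3" by code_simp
lemma lV1_3: "length V1_3 = length L3" by code_simp
lemma lS1_3: "length S1_3 = 6" by code_simp

lemma chk2_3: "\<forall>(y,v)\<in>set (zip L3 V2_3). \<forall>x\<in>set L3. Q4_3!(f4 (r_of x y))!2 = sum_list (map2 (\<lambda>s c. Q4_3!(f4 (r_of x s))!2 * c) S2_3 v)"
  by code_simp
lemma lv2_3: "\<forall>v\<in>set V2_3. length v = length S2_3" by code_simp
lemma lV2_3: "length V2_3 = length L3" by code_simp
lemma lS2_3: "length S2_3 = 8" by code_simp

lemma chk3_3: "\<forall>(y,v)\<in>set (zip L3 V3_3). \<forall>x\<in>set L3. Q4_3!(f4 (r_of x y))!3 = sum_list (map2 (\<lambda>s c. Q4_3!(f4 (r_of x s))!3 * c) S3_3 v)"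
  by code_simp
lemma lv3_3: "\<forall>v\<in>set V3_3. length v = length S3_3" by code_simp
lemma lV3_3: "length V3_3 = length L3" by code_simp
lemma lS3_3: "length S3_3 = 12" by code_simp

lemma q0_4_3: "\<forall>k<4. Q4_3!k!0 = 2" unfolding all_upt by code_simp
lemma q0_3_3: "\<forall>k<3. Q3_3!k!0 = 2" unfolding all_upt by code_simp
lemma q21_3: "\<forall>k<6. Q3_3!(f2 k)!1 = Q4_3!(f4 k)!2 \<and> Q3_3!(f2 k)!2 = Q4_3!(f4 k)!1 + Q4_3!(f4 k)!3"
  unfolding all_upt by code_simp

lemma rk4_3:
  assumes xs: "distinct xs" "set xs = Phi 3" and i: "i < 4"
  shows "vec_space.rank (length xs) (kmat xs (\<lambda>x y. of_int (Q4_3!(f4 (r_of x y))!i) / of_nat 54)) \<le> [1, 6, 8, 12]!i"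
proof -
  have sx: "set xs = set L3" using xs Phi3 by simp
  consider "i = 0" | "i = 1" | "i = 2" | "i = 3" using i by linarith
  then show ?thesis
  proof cases
    case 1
    have "vec_space.rank (length xs) (kmat xs (\<lambda>x y. of_int (Q4_3!(f4 (r_of x y))!0) / of_nat 54)) \<le> 1"
      by (rule rank_const[where c="of_int 2 / of_nat 54"]) (use q0_4_3 in \<open>simp add: f4_def\<close>)
    then show ?thesis using 1 by simp
  next
    case 2
    show ?thesis unfolding 2
      by (rule rank_from_decomp[OF chk1_3 lv1_3 lV1_3 sx, where M="of_nat 54"]) (simp_all add: lS1_3)
  next
    case 3
    show ?thesis unfolding 3
      by (rule rank_from_decomp[OF chk2_3 lv2_3 lV2_3 sx, where M="of_nat 54"]) (simp_all add: lS2_3)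
  next
    case 4
    show ?thesis unfolding 4
      by (rule rank_from_decomp[OF chk3_3 lv3_3 lV3_3 sx, where M="of_nat 54"]) (simp_all add: lS3_3)
  qed
qed

lemma rk3_3:
  assumes xs: "distinct xs" "set xs = Phi 3" and i: "i < 3"
  shows "vec_space.rank (length xs) (kmat xs (\<lambda>x y. of_int (Q3_3!(f2 (r_of x y))!i) / of_nat 54)) \<le> [1, 8, 18]!i"
proof -
  have sx: "set xs = set L3" using xs Phi3 by simp
  have r6: "\<And>x y. x \<in> set xs \<Longrightarrow> y \<in> set xs \<Longrightarrow> r_of x y < 6" using relc3 sx by blast
  consider "i = 0" | "i = 1" | "i = 2" using i by linarith
  then show ?thesis
  proof cases
    case 1
    have "vec_space.rank (length xs) (kmat xs (\<lambda>x y. of_int (Q3_3!(f2 (r_of x y))!0) / of_nat 54)) \<le> 1"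
      by (rule rank_const[where c="of_int 2 / of_nat 54"]) (use q0_3_3 in \<open>simp add: f2_def\<close>)
    then show ?thesis using 1 by simp
  next
    case 2
    have "kmat xs (\<lambda>x y. of_int (Q3_3!(f2 (r_of x y))!1) / of_nat 54) = kmat xs (\<lambda>x y. of_int (Q4_3!(f4 (r_of x y))!2) / of_nat 54)"
      by (rule kmat_cong) (use q21_3 r6 in simp)
    moreover have "vec_space.rank (length xs) (kmat xs (\<lambda>x y. of_int (Q4_3!(f4 (r_of x y))!2) / of_nat 54)) \<le> 8"
      using rk4_3[OF xs, of 2] by simp
    ultimately show ?thesis using 2 by simp
  next
    case 3
    have "kmat xs (\<lambda>x y. of_int (Q3_3!(f2 (r_of x y))!2) / of_nat 54) = kmat xs (\<lambda>x y. of_int (Q4_3!(f4 (r_of x y))!1) / of_nat 54 + of_int (Q4_3!(f4 (r_of x y))!3) / of_nat 54)"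
      by (rule kmat_cong) (use q21_3 r6 in \<open>simp add: add_divide_distrib\<close>)
    moreover have "vec_space.rank (length xs) (kmat xs (\<lambda>x y. of_int (Q4_3!(f4 (r_of x y))!1) / of_nat 54 + of_int (Q4_3!(f4 (r_of x y))!3) / of_nat 54))
       \<le> 6 + 12"
      using rank_kmat_add[of xs "\<lambda>x y. of_int (Q4_3!(f4 (r_of x y))!1) / of_nat 54" "\<lambda>x y. of_int (Q4_3!(f4 (r_of x y))!3) / of_nat 54"]
        rk4_3[OF xs, of 1] rk4_3[OF xs, of 3] by simp
    ultimately show ?thesis using 3 by simp
  qed
qed

lemma ct4_3: "has_char_table (Phi 3) (relsof (Phi 3) (\<lambda>x y. f4 (r_of x y)) 4) [[1, 2, 8, 16], [1, -1, -4, 4], [1, 2, -1, -2], [1, -1, 2, -2]] [1, 6, 8, 12]"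
  by (rule cscheme.ctable_int[OF cs4_3 _ I1_4_3 I2_4_3 I3_4_3 I4_4_3 I5_4_3 I6_4_3 I7_4_3 rk4_3 I9_4_3 I10_4_3]) simp

lemma ct3_3: "has_char_table (Phi 3) (relsof (Phi 3) (\<lambda>x y. f2 (r_of x y)) 3) [[1, 2, 24], [1, 2, -3], [1, -1, 0]] [1, 8, 18]"
  by (rule cscheme.ctable_int[OF cs3_3 _ I1_3_3 I2_3_3 I3_3_3 I4_3_3 I5_3_3 I6_3_3 I7_3_3 rk3_3 I9_3_3 I10_3_3]) simp

theorem corollary5p5:
  shows
  "(\<forall>n \<in> {2::nat, 3}.
      assoc_scheme (Phi n) [Rel n 0, Rel n 1 \<union> Rel n 2, Rel n 3, Rel n 4 \<union> Rel n 5] \<and>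
      assoc_scheme (Phi n) [Rel n 0, Rel n 1 \<union> Rel n 2, Rel n 3 \<union> Rel n 4 \<union> Rel n 5]) \<and>
   has_char_table (Phi 2) [Rel 2 0, Rel 2 1 \<union> Rel 2 2, Rel 2 3, Rel 2 4 \<union> Rel 2 5]
     [[1, 2, 2, 4], [1, -1, 2, -2], [1, 2, -1, -2], [1, -1, -1, 1]] [1, 2, 2, 4] \<and>
   has_char_table (Phi 3) [Rel 3 0, Rel 3 1 \<union> Rel 3 2, Rel 3 3, Rel 3 4 \<union> Rel 3 5]
     [[1, 2, 8, 16], [1, -1, -4, 4], [1, 2, -1, -2], [1, -1, 2, -2]] [1, 6, 8, 12] \<and>
   has_char_table (Phi 2) [Rel 2 0, Rel 2 1 \<union> Rel 2 2, Rel 2 3 \<union> Rel 2 4 \<union> Rel 2 5]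
     [[1, 2, 6], [1, 2, -3], [1, -1, 0]] [1, 2, 6] \<and>
   has_char_table (Phi 3) [Rel 3 0, Rel 3 1 \<union> Rel 3 2, Rel 3 3 \<union> Rel 3 4 \<union> Rel 3 5]
     [[1, 2, 24], [1, 2, -3], [1, -1, 0]] [1, 8, 18]"
proof -
  have a4_2: "assoc_scheme (Phi 2) [Rel 2 0, Rel 2 1 \<union> Rel 2 2, Rel 2 3, Rel 2 4 \<union> Rel 2 5]"
    unfolding rels4[OF rel2] by (rule cscheme.is_scheme[OF cs4_2])
  have a3_2: "assoc_scheme (Phi 2) [Rel 2 0, Rel 2 1 \<union> Rel 2 2, Rel 2 3 \<union> Rel 2 4 \<union> Rel 2 5]"
    unfolding rels3[OF rel2] by (rule cscheme.is_scheme[OF cs3_2])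
  have a4_3: "assoc_scheme (Phi 3) [Rel 3 0, Rel 3 1 \<union> Rel 3 2, Rel 3 3, Rel 3 4 \<union> Rel 3 5]"
    unfolding rels4[OF rel3] by (rule cscheme.is_scheme[OF cs4_3])
  have a3_3: "assoc_scheme (Phi 3) [Rel 3 0, Rel 3 1 \<union> Rel 3 2, Rel 3 3 \<union> Rel 3 4 \<union> Rel 3 5]"
    unfolding rels3[OF rel3] by (rule cscheme.is_scheme[OF cs3_3])
  have c4_2: "has_char_table (Phi 2) [Rel 2 0, Rel 2 1 \<union> Rel 2 2, Rel 2 3, Rel 2 4 \<union> Rel 2 5]
     [[1, 2, 2, 4], [1, -1, 2, -2], [1, 2, -1, -2], [1, -1, -1, 1]] [1, 2, 2, 4]"
    unfolding rels4[OF rel2] by (rule ct4_2)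
  have c4_3: "has_char_table (Phi 3) [Rel 3 0, Rel 3 1 \<union> Rel 3 2, Rel 3 3, Rel 3 4 \<union> Rel 3 5]
     [[1, 2, 8, 16], [1, -1, -4, 4], [1, 2, -1, -2], [1, -1, 2, -2]] [1, 6, 8, 12]"
    unfolding rels4[OF rel3] by (rule ct4_3)
  have c3_2: "has_char_table (Phi 2) [Rel 2 0, Rel 2 1 \<union> Rel 2 2, Rel 2 3 \<union> Rel 2 4 \<union> Rel 2 5]
     [[1, 2, 6], [1, 2, -3], [1, -1, 0]] [1, 2, 6]"
    unfolding rels3[OF rel2] by (rule ct3_2)
  have c3_3: "has_char_table (Phi 3) [Rel 3 0, Rel 3 1 \<union> Rel 3 2, Rel 3 3 \<union> Rel 3 4 \<union> Rel 3 5]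
     [[1, 2, 24], [1, 2, -3], [1, -1, 0]] [1, 8, 18]"
    unfolding rels3[OF rel3] by (rule ct3_3)
  show ?thesis using a4_2 a3_2 a4_3 a3_3 c4_2 c4_3 c3_2 c3_3 by simp
qed

end
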